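(* Let $m$ be a positive integer, $r\geq 3$, and let $\mathcal{G}$ and $\mathcal{H}$ be $r$-uniform supertrees with $u\in V(\mathcal{G})$ and $v\in V(\mathcal{H})$. Then (i) $\rho\big((\mathcal{G}_u\cdot m\mathcal{H}_v)\cup(m-1)\mathcal{G}\big)=\rho\big((\mathcal{H}_v\cdot m\mathcal{G}_u)\cup(m-1)\mathcal{H}\big)$ and $\rho(\mathcal{G}_u\cdot m\mathcal{H}_v)=\rho(\mathcal{H}_v\cdot m\mathcal{G}_u)$; (ii) $ME\big((\mathcal{G}_u\cdot m\mathcal{H}_v)\cup(m-1)\mathcal{G}\big)=ME\big((\mathcal{H}_v\cdot m\mathcal{G}_u)\cup(m-1)\mathcal{H}\big)$.
   Context: An $r$-uniform supertree is a connected acyclic hypergraph each of whose edges has exactly $r$ vertices. $\cup$ denotes disjoint union and $k\mathcal{G}$ the disjoint union of $k$ copies of $\mathcal{G}$. $\mathcal{G}_u\cdot m\mathcal{H}_v$ is obtained from $\mathcal{G}$ and $m$ disjoint copies of $\mathcal{H}$ by adding $m$ new edges $e_i=\{v_{i,1},\dots,v_{i,r}\}$ ($i=1,\dots,m$), where $v_{i,1}$ is identified with $u$, $v_{i,r}$ with the vertex $v$ of the $i$-th copy of $\mathcal{H}$, and $v_{i,2},\dots,v_{i,r-1}$ are new distinct vertices; $\mathcal{H}_v\cdot m\mathcal{G}_u$ is defined analogously with $(\mathcal{G},u)$ and $(\mathcal{H},v)$ exchanged. For an $r$-uniform hypergraph $\mathcal{K}$ on $n$ vertices, $m(\mathcal{K},k)$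 is the number of sets of $k$ pairwise disjoint edges ($m(\mathcal{K},0)=1$), $\varphi(\mathcal{K},x)=\sum_{k\geq0}(-1)^km(\mathcal{K},k)x^{n-kr}$, and $ME(\mathcal{K})$ is the sum of absolute values of all roots (with multiplicity) of $\varphi(\mathcal{K},x)$. The adjacency tensor has entries $a_{i_1\cdots i_r}=1/(r-1)!$ if $\{i_1,\dots,i_r\}$ is an edge and $0$ otherwise; $\lambda$ is an eigenvalue if some nonzero $x\in\mathbb{C}^n$ satisfies $\sum_{i_2,\dots,i_r}a_{ii_2\cdots i_r}x_{i_2}\cdots x_{i_r}=\lambda x_i^{r-1}$ for all $i$; $\rho(\mathcal{K})$ is the maximum modulus of the eigenvalues. *)

theory Defs
  imports Complex_Main "HOL-Computational_Algebra.Polynomial"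
begin

type_synonym 'a hgraph = "'a set \<times> 'a set set"

definition verts :: "'a hgraph \<Rightarrow> 'a set" where "verts K = fst K"
definition edges :: "'a hgraph \<Rightarrow> 'a set set" where "edges K = snd K"

definition uniform_hg :: "nat \<Rightarrow> 'a hgraph \<Rightarrow> bool" where
  "uniform_hg r K \<longleftrightarrow> finite (verts K) \<and>
     (\<forall>e\<in>edges K. e \<subseteq> verts K \<and> card e = r)"

definition hg_connected :: "'a hgraph \<Rightarrow> bool" where
  "hg_connected K \<longleftrightarrow> (\<forall>x\<in>verts K. \<forall>y\<in>verts K.
     (\<lambda>a b. \<exists>e\<in>edges K. a \<in> e \<and> b \<in> e)\<^sup>*\<^sup>* x y)"

definition hg_has_cycle :: "'a hgraph \<Rightarrow> bool" where
  "hg_has_cycle K \<longleftrightarrow> (\<exists>k::nat. \<exists>vs es. k \<ge> 2 \<and> inj_on vs {..<k} \<and> inj_on es {..<k} \<and>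
     (\<forall>i<k. es i \<in> edges K \<and> vs i \<in> es i \<and> vs (Suc i mod k) \<in> es i))"

definition supertree :: "nat \<Rightarrow> 'a hgraph \<Rightarrow> bool" where
  "supertree r K \<longleftrightarrow> uniform_hg r K \<and> hg_connected K \<and> \<not> hg_has_cycle K"

definition dunion :: "'a hgraph \<Rightarrow> 'b hgraph \<Rightarrow> ('a + 'b) hgraph" where
  "dunion K L = (Inl ` verts K \<union> Inr ` verts L,
                 (\<lambda>e. Inl ` e) ` edges K \<union> (\<lambda>e. Inr ` e) ` edges L)"

definition copies :: "nat \<Rightarrow> 'a hgraph \<Rightarrow> (nat \<times> 'a) hgraph" where
  "copies k K = ({..<k} \<times> verts K,
                 {(\<lambda>x. (i, x)) ` e | i e. i < k \<and> e \<in> edges K})"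

text \<open>The hypergraph G_u . m H_v: vertices Inl g (from G), Inr (Inl (i,h)) (i-th copy of H),
  Inr (Inr (i,j)) (new vertices v_{i,j}, 2 <= j <= r-1, of the new edge e_i).\<close>
definition coalesce :: "nat \<Rightarrow> 'a hgraph \<Rightarrow> 'a \<Rightarrow> nat \<Rightarrow> 'b hgraph \<Rightarrow> 'b
                        \<Rightarrow> ('a + (nat \<times> 'b) + (nat \<times> nat)) hgraph" where
  "coalesce r G u m H v =
    (Inl ` verts G \<union> (\<lambda>(i,h). Inr (Inl (i,h))) ` ({..<m} \<times> verts H)
       \<union> (\<lambda>(i,j). Inr (Inr (i,j))) ` ({..<m} \<times> {2..r-1}),
     (\<lambda>e. Inl ` e) ` edges G
       \<union> {(\<lambda>h. Inr (Inl (i,h))) ` e | i e. i < m \<and> e \<in> edges H}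
       \<union> {{Inl u, Inr (Inl (i,v))} \<union> (\<lambda>j. Inr (Inr (i,j))) ` {2..r-1} | i. i < m})"

definition match_count :: "'a hgraph \<Rightarrow> nat \<Rightarrow> nat" where
  "match_count K k = card {M. M \<subseteq> edges K \<and> card M = k \<and>
      (\<forall>e\<in>M. \<forall>f\<in>M. e \<noteq> f \<longrightarrow> e \<inter> f = {})}"

definition matching_poly :: "nat \<Rightarrow> 'a hgraph \<Rightarrow> complex poly" where
  "matching_poly r K = (\<Sum>k\<in>{..card (verts K) div r}.
      monom ((-1)^k * of_nat (match_count K k)) (card (verts K) - k * r))"

definition matching_energy :: "nat \<Rightarrow> 'a hgraph \<Rightarrow> real" where
  "matching_energy r K = (let p = matching_poly r K in
     (\<Sum>z\<in>{z. poly p z = 0}. of_nat (order z p) * cmod z))"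

definition adj_tensor :: "nat \<Rightarrow> 'a hgraph \<Rightarrow> 'a list \<Rightarrow> complex" where
  "adj_tensor r K is = (if set is \<in> edges K then 1 / of_nat (fact (r - 1)) else 0)"

definition is_eigenvalue :: "nat \<Rightarrow> 'a hgraph \<Rightarrow> complex \<Rightarrow> bool" where
  "is_eigenvalue r K lam \<longleftrightarrow> (\<exists>x :: 'a \<Rightarrow> complex. (\<exists>i\<in>verts K. x i \<noteq> 0) \<and>
     (\<forall>i\<in>verts K.
        (\<Sum>is\<in>{is. length is = r - 1 \<and> set is \<subseteq> verts K}.
            adj_tensor r K (i # is) * prod_list (map x is)) = lam * x i ^ (r - 1)))"

definition spectral_radius :: "nat \<Rightarrow> 'a hgraph \<Rightarrow> real" where
  "spectral_radius r K = Sup {cmod lam | lam. is_eigenvalue r K lam}"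

end

theory Submission
  imports Defs "HOL-Combinatorics.Multiset_Permutations" "HOL-Analysis.Analysis"
begin

lemma uniform_finite_edges: "uniform_hg r K \<Longrightarrow> finite (edges K)"
  unfolding uniform_hg_def by (meson Pow_iff finite_Pow_iff finite_subset subsetI)

lemma tensor_lists_eq:
  assumes U: "uniform_hg r K" and r: "r \<ge> 1" and e: "e \<in> edges K" and i: "i \<in> e"
  shows "{is. (length is = r - 1 \<and> set is \<subseteq> verts K) \<and> insert i (set is) = e}
         = permutations_of_set (e - {i})"
proof -
  have ce: "card e = r" and eV: "e \<subseteq> verts K" using U e unfolding uniform_hg_def by auto
  have fe: "finite e" using ce r card_ge_0_finite by force
  show ?thesis
  proof (intro equalityI subsetI)
    fix xs assume "xs \<in> {is. (length is = r - 1 \<and> set is \<subseteq> verts K) \<and> insert i (set is) = e}"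
    hence l: "length xs = r - 1" and ins: "insert i (set xs) = e" by auto
    have "card (set xs) \<le> r - 1" using l card_length by metis
    moreover have "r = (if i \<in> set xs then card (set xs) else Suc (card (set xs)))"
      using ins ce by (metis List.finite_set card_insert_if)
    ultimately have "i \<notin> set xs" and "card (set xs) = length xs" using l r by (auto split: if_splits)
    hence "distinct xs" "set xs = e - {i}" using ins card_distinct by auto
    thus "xs \<in> permutations_of_set (e - {i})" by auto
  next
    fix xs assume "xs \<in> permutations_of_set (e - {i})"
    hence s: "set xs = e - {i}" and d: "distinct xs" by (auto dest: permutations_of_setD)
    have "length xs = card (e - {i})" using s d distinct_card by metis
    also have "\<dots> = r - 1" using ce i fe by simp
    finally show "xs \<in> {is. (length is = r - 1 \<and> set is \<subseteq> verts K) \<and> insert i (set is) = e}"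
      using s eV i by auto
  qed
qed

lemma tensor_sum:
  fixes x :: "'c \<Rightarrow> complex"
  assumes U: "uniform_hg r K" and r: "r \<ge> 1" and iV: "i \<in> verts K"
  shows "(\<Sum>is\<in>{is. length is = r - 1 \<and> set is \<subseteq> verts K}. adj_tensor r K (i # is) * prod_list (map x is))
       = (\<Sum>e\<in>{e\<in>edges K. i \<in> e}. \<Prod>j\<in>e - {i}. x j)"
proof -
  let ?S = "{is. length is = r - 1 \<and> set is \<subseteq> verts K}"
  let ?E = "{e\<in>edges K. i \<in> e}"
  have fS: "finite ?S" using U unfolding uniform_hg_def
    using finite_lists_length_eq[of "verts K" "r - 1"] by (simp add: conj_commute)
  have fE: "finite ?E" using uniform_finite_edges[OF U] by simp
  have "\<And>is. adj_tensor r K (i # is) * prod_list (map x is)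
      = (\<Sum>e\<in>?E. if insert i (set is) = e then prod_list (map x is) / of_nat (fact (r - 1)) else 0)"
    using fE by (simp add: adj_tensor_def sum.delta')
  hence "(\<Sum>is\<in>?S. adj_tensor r K (i # is) * prod_list (map x is))
       = (\<Sum>is\<in>?S. \<Sum>e\<in>?E. if insert i (set is) = e then prod_list (map x is) / of_nat (fact (r - 1)) else 0)"
    by simp
  also have "\<dots> = (\<Sum>e\<in>?E. \<Sum>is\<in>?S. if insert i (set is) = e then prod_list (map x is) / of_nat (fact (r - 1)) else 0)"
    by (rule sum.swap)
  also have "\<dots> = (\<Sum>e\<in>?E. \<Prod>j\<in>e - {i}. x j)"
  proof (rule sum.cong[OF refl])
    fix e assume e: "e \<in> ?E"
    have ce: "card e = r" using U e unfolding uniform_hg_def by auto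
    have fe: "finite e" using ce r card_ge_0_finite by force
    have "(\<Sum>is\<in>?S. if insert i (set is) = e then prod_list (map x is) / of_nat (fact (r - 1)) else 0)
        = (\<Sum>is\<in>{is \<in> ?S. insert i (set is) = e}. prod_list (map x is) / of_nat (fact (r - 1)))"
      using fS by (rule sum.inter_filter[symmetric])
    also have "{is \<in> ?S. insert i (set is) = e} = permutations_of_set (e - {i})"
      using tensor_lists_eq[OF U r] e by auto
    also have "(\<Sum>is\<in>permutations_of_set (e - {i}). prod_list (map x is) / of_nat (fact (r - 1)))
        = (\<Sum>is\<in>permutations_of_set (e - {i}). (\<Prod>j\<in>e - {i}. x j) / of_nat (fact (r - 1)))"
    proof (rule sum.cong[OF refl])
      fix xs assume "xs \<in> permutations_of_set (e - {i})"
      hence "set xs = e - {i}" "distinct xs" by (auto dest: permutations_of_setD)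
      thus "prod_list (map x xs) / of_nat (fact (r - 1)) = (\<Prod>j\<in>e - {i}. x j) / of_nat (fact (r - 1))"
        by (metis prod.distinct_set_conv_list)
    qed
    also have "\<dots> = (\<Prod>j\<in>e - {i}. x j)"
      using fe ce e by simp
    finally show "(\<Sum>is\<in>?S. if insert i (set is) = e then prod_list (map x is) / of_nat (fact (r - 1)) else 0)
        = (\<Prod>j\<in>e - {i}. x j)" .
  qed
  finally show ?thesis .
qed

definition FF :: "'c hgraph \<Rightarrow> ('c \<Rightarrow> real) \<Rightarrow> real" where
  "FF K y = (\<Sum>e\<in>edges K. \<Prod>i\<in>e. y i)"
definition NN :: "nat \<Rightarrow> 'c hgraph \<Rightarrow> ('c \<Rightarrow> real) \<Rightarrow> real" where
  "NN r K y = (\<Sum>i\<in>verts K. y i ^ r)"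
definition PP :: "nat \<Rightarrow> 'c hgraph \<Rightarrow> ('c \<Rightarrow> real) set" where
  "PP r K = {y. (\<forall>i\<in>verts K. 0 \<le> y i) \<and> NN r K y = 1}"
definition MM :: "nat \<Rightarrow> 'c hgraph \<Rightarrow> real" where
  "MM r K = Sup (FF K ` PP r K)"

lemma first_order:
  fixes a c M :: real
  assumes a: "0 \<le> a" and M: "0 \<le> M" and r: "r \<ge> 2" and c: "0 \<le> c"
    and H: "\<And>t. -a \<le> t \<Longrightarrow> t * c \<le> M * ((a + t) ^ r - a ^ r)"
  shows "c = M * r * a ^ (r - 1)"
proof (cases "a = 0")
  case True
  have "c \<le> 0"
  proof (rule ccontr)
    assume "\<not> c \<le> 0"
    hence cp: "c > 0" by simp
    define t where "t = min 1 (c / (2 * (M + 1)))"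
    have t0: "0 < t" and t1: "t \<le> 1" and t2: "t \<le> c / (2 * (M + 1))" using cp M by (auto simp: t_def)
    have z: "(a + t) ^ r - a ^ r = t ^ r" using r True by simp
    have "t * c \<le> M * ((a + t) ^ r - a ^ r)" using H[of t] True t0 by simp
    hence "t * c \<le> M * t ^ r" by (simp only: z)
    moreover have "t ^ r = t * t ^ (r - 1)"
    proof -
      have "r = Suc (r - 1)" using r by simp
      hence "t ^ r = t ^ Suc (r - 1)" by simp
      thus ?thesis by simp
    qed
    ultimately have "c \<le> M * t ^ (r - 1)" using t0 by (simp add: mult.left_commute)
    moreover have "t ^ (r - 1) \<le> t ^ 1" using t0 t1 r by (intro power_decreasing) auto
    hence "t ^ (r - 1) \<le> t" by simp
    hence "M * t ^ (r - 1) \<le> M * t" using M by (simp add: mult_left_mono)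
    moreover have "M * t \<le> M * (c / (2 * (M + 1)))" using t2 M by (rule mult_left_mono)
    moreover have "M * (c / (2 * (M + 1))) < c" using M cp by (simp add: field_simps add_nonneg_pos mult_nonneg_nonneg)
    ultimately show False by linarith
  qed
  thus ?thesis using c True r by simp
next
  case False
  hence ap: "a > 0" using a by simp
  define f where "f t = M * ((a + t) ^ r - a ^ r) - t * c" for t
  have D: "(f has_real_derivative (M * (of_nat r * (a + 0) ^ (r - 1)) - c)) (at 0)"
    unfolding f_def by (auto intro!: derivative_eq_intros)
  have "M * (of_nat r * (a + 0) ^ (r - 1)) - c = 0"
  proof (rule DERIV_local_min[OF D ap])
    show "\<forall>y. \<bar>0 - y\<bar> < a \<longrightarrow> f 0 \<le> f y" using H by (auto simp: f_def)
  qed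
  thus ?thesis by (simp add: algebra_simps)
qed

locale hgctx =
  fixes r :: nat and K :: "'c hgraph"
  assumes U: "uniform_hg r K" and r2: "r \<ge> 2" and ne: "verts K \<noteq> {}"
begin

lemma finV: "finite (verts K)" using U by (simp add: uniform_hg_def)
lemma finE: "finite (edges K)" using U by (rule uniform_finite_edges)
lemma eV: "e \<in> edges K \<Longrightarrow> e \<subseteq> verts K" using U by (simp add: uniform_hg_def)
lemma ce: "e \<in> edges K \<Longrightarrow> card e = r" using U by (simp add: uniform_hg_def)
lemma fe: "e \<in> edges K \<Longrightarrow> finite e" using ce r2 by (metis card.infinite not_numeral_le_zero)
lemma e_ne: "e \<in> edges K \<Longrightarrow> e \<noteq> {}" using ce r2 by fastforce

lemma FF_nonneg: "(\<And>i. i \<in> verts K \<Longrightarrow> 0 \<le> y i) \<Longrightarrow> 0 \<le> FF K y"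
  unfolding FF_def by (intro sum_nonneg prod_nonneg) (use eV in blast)

lemma PP_le1: assumes "y \<in> PP r K" "i \<in> verts K" shows "y i \<le> 1"
proof -
  have nn: "\<forall>j\<in>verts K. 0 \<le> y j" and N: "NN r K y = 1" using assms by (auto simp: PP_def)
  have "y i ^ r \<le> NN r K y" unfolding NN_def
    by (rule member_le_sum) (use nn assms finV in auto)
  hence "y i ^ r \<le> 1" using N by simp
  thus ?thesis using r2 nn assms(2) by (metis not_numeral_le_zero power_le_one_iff)
qed

lemma FF_bound: assumes "y \<in> PP r K" shows "FF K y \<le> real (card (edges K))"
proof -
  have "FF K y \<le> (\<Sum>e\<in>edges K. 1)" unfolding FF_def
  proof (rule sum_mono)
    fix e assume e: "e \<in> edges K"
    show "(\<Prod>i\<in>e. y i) \<le> 1"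
      by (rule prod_le_1) (use assms PP_le1 eV[OF e] in \<open>auto simp: PP_def\<close>)
  qed
  thus ?thesis by simp
qed

lemma bdd: "bdd_above (FF K ` PP r K)"
  using FF_bound by (auto intro!: bdd_aboveI)

lemma FF_scale: "FF K (\<lambda>i. s * y i) = s ^ r * FF K y"
  unfolding FF_def by (simp add: prod.distrib sum_distrib_left ce)

lemma NN_scale: "NN r K (\<lambda>i. s * y i) = s ^ r * NN r K y"
  unfolding NN_def by (simp add: power_mult_distrib sum_distrib_left)

lemma FF_restrict: "FF K (restrict y (verts K)) = FF K y"
  unfolding FF_def by (intro sum.cong refl prod.cong) (use eV in auto)

lemma NN_restrict: "NN r K (restrict y (verts K)) = NN r K y"
  unfolding NN_def by auto

lemma NN_cont: "continuous_on UNIV (NN r K)"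
  unfolding NN_def by (intro continuous_intros continuous_on_product_coordinates)

lemma FF_cont: "continuous_on UNIV (FF K)"
  unfolding FF_def by (intro continuous_intros continuous_on_product_coordinates)

lemma delta_PP: assumes "w \<in> verts K" shows "(\<lambda>i. if i = w then 1 else 0) \<in> PP r K"
proof -
  have "NN r K (\<lambda>i. if i = w then 1 else 0) = (\<Sum>i\<in>verts K. if i = w then 1 else 0)"
    unfolding NN_def using r2 by (intro sum.cong) auto
  also have "\<dots> = 1" using assms finV by simp
  finally show ?thesis by (auto simp: PP_def)
qed

lemma maximizer: "\<exists>z\<in>PP r K. \<forall>y\<in>PP r K. FF K y \<le> FF K z"
proof -
  define S where "S = PiE (verts K) (\<lambda>_. {0..1::real}) \<inter> {y. NN r K y = 1}"
  have c1: "compact (PiE (verts K) (\<lambda>_. {0..1::real}))"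
  proof -
    have "compactin (product_topology (\<lambda>_. euclidean) UNIV) (PiE UNIV (\<lambda>i. if i \<in> verts K then {0..1::real} else {undefined}))"
      by (subst compactin_PiE) auto
    moreover have "PiE UNIV (\<lambda>i. if i \<in> verts K then {0..1::real} else {undefined}) = PiE (verts K) (\<lambda>_. {0..1::real})"
      by (auto simp: PiE_def Pi_def extensional_def split: if_splits)
    ultimately show ?thesis by (simp add: euclidean_product_topology)
  qed
  have "closed {y. NN r K y = 1}"
    using closed_Collect_eq[OF NN_cont continuous_on_const] .
  hence cS: "compact S" unfolding S_def using c1 by (rule compact_Int_closed[rotated])
  obtain w where w: "w \<in> verts K" using ne by auto
  have SP: "S \<subseteq> PP r K" unfolding S_def PP_def by (auto simp: PiE_def Pi_def)
  have PS: "restrict y (verts K) \<in> S" if "y \<in> PP r K" for y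
    using that PP_le1[OF that] NN_restrict[of y] unfolding S_def by (auto simp: PP_def)
  have "S \<noteq> {}" using PS[OF delta_PP[OF w]] by auto
  from continuous_attains_sup[OF cS this continuous_on_subset[OF FF_cont subset_UNIV]]
  obtain z where z: "z \<in> S" "\<forall>y\<in>S. FF K y \<le> FF K z" by blast
  show ?thesis
  proof (intro bexI ballI)
    show "z \<in> PP r K" using z SP by auto
    fix y assume "y \<in> PP r K"
    thus "FF K y \<le> FF K z" using z(2) PS FF_restrict by metis
  qed
qed

lemma MM_attained: obtains z where "z \<in> PP r K" "FF K z = MM r K"
proof -
  obtain z where z: "z \<in> PP r K" "\<forall>y\<in>PP r K. FF K y \<le> FF K z" using maximizer by blast
  have "MM r K = FF K z" unfolding MM_def using z by (intro cSup_eq_maximum) auto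
  thus ?thesis using that z by auto
qed

lemma MM_ge: "y \<in> PP r K \<Longrightarrow> FF K y \<le> MM r K"
  unfolding MM_def using bdd by (intro cSup_upper) auto

lemma MM_nonneg: "0 \<le> MM r K"
proof -
  obtain z where "z \<in> PP r K" "FF K z = MM r K" by (rule MM_attained)
  thus ?thesis using FF_nonneg[of z] by (auto simp: PP_def)
qed

lemma FF_le_MM: assumes nn: "\<And>i. i \<in> verts K \<Longrightarrow> 0 \<le> y i"
  shows "FF K y \<le> MM r K * NN r K y"
proof (cases "NN r K y = 0")
  case True
  have z: "\<forall>i\<in>verts K. y i ^ r = 0"
    using True finV nn unfolding NN_def by (subst (asm) sum_nonneg_eq_0_iff) auto
  have "FF K y = 0" unfolding FF_def
  proof (intro sum.neutral ballI)
    fix e assume e: "e \<in> edges K"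
    then obtain i where "i \<in> e" using e_ne by blast
    hence "y i = 0" using z eV[OF e] by auto
    thus "(\<Prod>i\<in>e. y i) = 0" using fe[OF e] \<open>i \<in> e\<close> by (meson prod_zero_iff)
  qed
  thus ?thesis using True by simp
next
  case False
  have n0: "NN r K y > 0" using False nn unfolding NN_def by (metis order_le_less sum_nonneg zero_le_power)
  define s where "s = 1 / root r (NN r K y)"
  have rs: "root r (NN r K y) ^ r = NN r K y" using n0 r2 by (intro real_root_pow_pos2) auto
  have sr: "s ^ r = 1 / NN r K y" unfolding s_def by (simp add: power_divide rs)
  have s0: "s \<ge> 0" unfolding s_def using n0 r2 by simp
  have "(\<lambda>i. s * y i) \<in> PP r K" unfolding PP_def using NN_scale[of s y] sr n0 nn s0 by auto
  hence "FF K (\<lambda>i. s * y i) \<le> MM r K" by (rule MM_ge)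
  hence "FF K y / NN r K y \<le> MM r K" using FF_scale sr by simp
  thus ?thesis using n0 by (simp add: divide_le_eq mult_ac)
qed

end

context hgctx begin

lemma eig_bound: assumes "is_eigenvalue r K lam" shows "cmod lam \<le> r * MM r K"
proof -
  obtain x where x0: "\<exists>i\<in>verts K. x i \<noteq> 0" and eq0: "\<forall>i\<in>verts K.
        (\<Sum>is\<in>{is. length is = r - 1 \<and> set is \<subseteq> verts K}.
            adj_tensor r K (i # is) * prod_list (map x is)) = lam * x i ^ (r - 1)"
    using assms unfolding is_eigenvalue_def by blast
  have r1: "r \<ge> 1" using r2 by simp
  have eq: "(\<Sum>e\<in>{e\<in>edges K. i \<in> e}. \<Prod>j\<in>e - {i}. x j) = lam * x i ^ (r - 1)" if "i \<in> verts K" for i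
    using eq0 that tensor_sum[OF U r1 that, of x] by simp
  define a where "a j = cmod (x j)" for j
  have a0: "0 \<le> a j" for j by (simp add: a_def)
  have loc: "cmod lam * a i ^ r \<le> (\<Sum>e\<in>{e\<in>edges K. i \<in> e}. \<Prod>j\<in>e. a j)" if i: "i \<in> verts K" for i
  proof -
    have "cmod lam * a i ^ (r - 1) = cmod (lam * x i ^ (r - 1))" by (simp add: a_def norm_mult norm_power)
    also have "\<dots> = cmod (\<Sum>e\<in>{e\<in>edges K. i \<in> e}. \<Prod>j\<in>e - {i}. x j)" using eq[OF i] by simp
    also have "\<dots> \<le> (\<Sum>e\<in>{e\<in>edges K. i \<in> e}. cmod (\<Prod>j\<in>e - {i}. x j))" by (rule norm_sum)
    also have "\<dots> = (\<Sum>e\<in>{e\<in>edges K. i \<in> e}. \<Prod>j\<in>e - {i}. a j)" by (simp add: a_def prod_norm)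
    finally have h: "cmod lam * a i ^ (r - 1) \<le> (\<Sum>e\<in>{e\<in>edges K. i \<in> e}. \<Prod>j\<in>e - {i}. a j)" .
    have "cmod lam * a i ^ r = a i * (cmod lam * a i ^ (r - 1))"
    proof -
      obtain k where k: "r = Suc k" using r2 by (cases r) auto
      hence "a i ^ r = a i * a i ^ (r - 1)" by simp
      thus ?thesis by simp
    qed
    also have "\<dots> \<le> a i * (\<Sum>e\<in>{e\<in>edges K. i \<in> e}. \<Prod>j\<in>e - {i}. a j)"
      using h a0 by (rule mult_left_mono)
    also have "\<dots> = (\<Sum>e\<in>{e\<in>edges K. i \<in> e}. \<Prod>j\<in>e. a j)"
      unfolding sum_distrib_left
    proof (rule sum.cong[OF refl])
      fix e assume "e \<in> {e\<in>edges K. i \<in> e}"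
      hence "e \<in> edges K" "i \<in> e" by auto
      thus "a i * (\<Prod>j\<in>e - {i}. a j) = (\<Prod>j\<in>e. a j)" using prod.remove[OF fe, of e i a] by simp
    qed
    finally show ?thesis .
  qed
  have "cmod lam * NN r K a = (\<Sum>i\<in>verts K. cmod lam * a i ^ r)" by (simp add: NN_def sum_distrib_left)
  also have "\<dots> \<le> (\<Sum>i\<in>verts K. \<Sum>e\<in>{e\<in>edges K. i \<in> e}. \<Prod>j\<in>e. a j)" by (rule sum_mono) (rule loc)
  also have "\<dots> = (\<Sum>e\<in>edges K. \<Sum>i\<in>{i\<in>verts K. i \<in> e}. \<Prod>j\<in>e. a j)"
    by (rule sum.swap_restrict[OF finV finE])
  also have "\<dots> = (\<Sum>e\<in>edges K. r * (\<Prod>j\<in>e. a j))"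
  proof (rule sum.cong[OF refl])
    fix e assume e: "e \<in> edges K"
    hence "{i\<in>verts K. i \<in> e} = e" using eV by auto
    thus "(\<Sum>i\<in>{i\<in>verts K. i \<in> e}. \<Prod>j\<in>e. a j) = r * (\<Prod>j\<in>e. a j)" using ce[OF e] by simp
  qed
  also have "\<dots> = r * FF K a" by (simp add: FF_def sum_distrib_left)
  also have "\<dots> \<le> r * (MM r K * NN r K a)" using FF_le_MM[of a] a0 by (simp add: mult_left_mono)
  finally have *: "cmod lam * NN r K a \<le> r * MM r K * NN r K a" by (simp add: mult.assoc)
  obtain i0 where i0: "i0 \<in> verts K" "x i0 \<noteq> 0" using x0 by blast
  have "0 < a i0 ^ r" using i0 by (simp add: a_def)
  also have "a i0 ^ r \<le> NN r K a" unfolding NN_def by (rule member_le_sum) (use i0 a0 finV in auto)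
  finally have "NN r K a > 0" .
  with * show ?thesis by simp
qed

lemma FF_update: "FF K (z(i := z i + t)) = FF K z + t * (\<Sum>e\<in>{e\<in>edges K. i \<in> e}. \<Prod>j\<in>e - {i}. z j)"
proof -
  have loc: "(\<Prod>j\<in>e. (z(i := z i + t)) j) = (\<Prod>j\<in>e. z j) + (if i \<in> e then t * (\<Prod>j\<in>e - {i}. z j) else 0)"
    if e: "e \<in> edges K" for e
  proof (cases "i \<in> e")
    case True
    have A: "(\<Prod>j\<in>e. (z(i := z i + t)) j) = (z(i := z i + t)) i * (\<Prod>j\<in>e - {i}. (z(i := z i + t)) j)"
      by (rule prod.remove[OF fe[OF e] True])
    have B: "(\<Prod>j\<in>e - {i}. (z(i := z i + t)) j) = (\<Prod>j\<in>e - {i}. z j)" by (intro prod.cong) auto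
    have C: "(\<Prod>j\<in>e. z j) = z i * (\<Prod>j\<in>e - {i}. z j)" by (rule prod.remove[OF fe[OF e] True])
    show ?thesis unfolding A B C using True by (simp add: algebra_simps)
  next
    case False
    have "(\<Prod>j\<in>e. (z(i := z i + t)) j) = (\<Prod>j\<in>e. z j)" using False by (intro prod.cong) auto
    thus ?thesis using False by simp
  qed
  have "FF K (z(i := z i + t)) = (\<Sum>e\<in>edges K. (\<Prod>j\<in>e. z j) + (if i \<in> e then t * (\<Prod>j\<in>e - {i}. z j) else 0))"
    unfolding FF_def by (rule sum.cong[OF refl loc])
  also have "\<dots> = FF K z + (\<Sum>e\<in>edges K. if i \<in> e then t * (\<Prod>j\<in>e - {i}. z j) else 0)"
    unfolding FF_def by (rule sum.distrib)
  also have "(\<Sum>e\<in>edges K. if i \<in> e then t * (\<Prod>j\<in>e - {i}. z j) else 0) = t * (\<Sum>e\<in>{e\<in>edges K. i \<in> e}. \<Prod>j\<in>e - {i}. z j)"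
    unfolding sum_distrib_left using finE by (rule sum.inter_filter[symmetric])
  finally show ?thesis .
qed

lemma NN_update: assumes "i \<in> verts K"
  shows "NN r K (z(i := z i + t)) = NN r K z + ((z i + t) ^ r - z i ^ r)"
proof -
  have A0: "NN r K (z(i := z i + t)) = (z i + t) ^ r + (\<Sum>j\<in>verts K - {i}. (z(i := z i + t)) j ^ r)"
    unfolding NN_def using assms finV by (simp add: sum.remove)
  have A1: "(\<Sum>j\<in>verts K - {i}. (z(i := z i + t)) j ^ r) = (\<Sum>j\<in>verts K - {i}. z j ^ r)"
    by (intro sum.cong) auto
  have B: "NN r K z = z i ^ r + (\<Sum>j\<in>verts K - {i}. z j ^ r)"
    unfolding NN_def using assms finV by (simp add: sum.remove)
  show ?thesis unfolding A0 A1 B by (simp add: algebra_simps)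
qed

lemma eig_max: "is_eigenvalue r K (complex_of_real (r * MM r K))"
proof -
  obtain z where zP: "z \<in> PP r K" and zM: "FF K z = MM r K" by (rule MM_attained)
  have zn: "\<forall>i\<in>verts K. 0 \<le> z i" and zN: "NN r K z = 1" using zP by (auto simp: PP_def)
  have r1: "r \<ge> 1" using r2 by simp
  have key: "(\<Sum>e\<in>{e\<in>edges K. i \<in> e}. \<Prod>j\<in>e - {i}. z j) = MM r K * r * z i ^ (r - 1)"
    if i: "i \<in> verts K" for i
  proof (rule first_order)
    show "0 \<le> z i" using zn i by auto
    show "0 \<le> MM r K" by (rule MM_nonneg)
    show "2 \<le> r" by (rule r2)
    show "0 \<le> (\<Sum>e\<in>{e\<in>edges K. i \<in> e}. \<Prod>j\<in>e - {i}. z j)"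
      using zn eV by (intro sum_nonneg prod_nonneg) blast
    fix t assume t: "- z i \<le> t"
    have "\<And>j. j \<in> verts K \<Longrightarrow> 0 \<le> (z(i := z i + t)) j" using zn t by auto
    hence "FF K (z(i := z i + t)) \<le> MM r K * NN r K (z(i := z i + t))" by (rule FF_le_MM)
    thus "t * (\<Sum>e\<in>{e\<in>edges K. i \<in> e}. \<Prod>j\<in>e - {i}. z j) \<le> MM r K * ((z i + t) ^ r - z i ^ r)"
      unfolding FF_update NN_update[OF i] zM zN by (simp add: algebra_simps)
  qed
  show ?thesis unfolding is_eigenvalue_def
  proof (intro exI conjI ballI)
    have "\<exists>i\<in>verts K. z i \<noteq> 0"
    proof (rule ccontr)
      assume "\<not> ?thesis"
      hence "NN r K z = 0" unfolding NN_def using r2 by simp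
      thus False using zN by simp
    qed
    thus "\<exists>i\<in>verts K. complex_of_real (z i) \<noteq> 0" by simp
    fix i assume i: "i \<in> verts K"
    have "(\<Sum>is\<in>{is. length is = r - 1 \<and> set is \<subseteq> verts K}.
            adj_tensor r K (i # is) * prod_list (map (\<lambda>j. complex_of_real (z j)) is))
        = (\<Sum>e\<in>{e\<in>edges K. i \<in> e}. \<Prod>j\<in>e - {i}. complex_of_real (z j))"
      by (rule tensor_sum[OF U r1 i])
    also have "\<dots> = complex_of_real (\<Sum>e\<in>{e\<in>edges K. i \<in> e}. \<Prod>j\<in>e - {i}. z j)" by simp
    also have "\<dots> = complex_of_real (r * MM r K) * complex_of_real (z i) ^ (r - 1)"
      unfolding key[OF i] by (simp add: mult_ac)
    finally show "(\<Sum>is\<in>{is. length is = r - 1 \<and> set is \<subseteq> verts K}.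
            adj_tensor r K (i # is) * prod_list (map (\<lambda>j. complex_of_real (z j)) is))
        = complex_of_real (r * MM r K) * complex_of_real (z i) ^ (r - 1)" .
  qed
qed

lemma spectral_radius_MM: "spectral_radius r K = r * MM r K"
  unfolding spectral_radius_def
proof (rule cSup_eq_maximum)
  show "r * MM r K \<in> {cmod lam |lam. is_eigenvalue r K lam}"
    using eig_max MM_nonneg by (intro CollectI exI[of _ "complex_of_real (r * MM r K)"]) (auto simp: norm_mult)
  fix y assume "y \<in> {cmod lam |lam. is_eigenvalue r K lam}"
  thus "y \<le> r * MM r K" using eig_bound by auto
qed

end

lemma uniform_edge_ne: "uniform_hg r K \<Longrightarrow> r \<ge> 1 \<Longrightarrow> e \<in> edges K \<Longrightarrow> e \<noteq> {}"
  unfolding uniform_hg_def by auto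

lemma uniform_edge_fin: "uniform_hg r K \<Longrightarrow> r \<ge> 1 \<Longrightarrow> e \<in> edges K \<Longrightarrow> finite e"
  unfolding uniform_hg_def by (metis card.infinite not_one_le_zero)

lemma sum_prod_img:
  assumes "inj f"
  shows "(\<Sum>e\<in>(\<lambda>e. f ` e) ` E. \<Prod>x\<in>e. y x) = (\<Sum>e\<in>E. \<Prod>x\<in>e. y (f x))"
proof -
  have "inj_on (\<lambda>e. f ` e) E" using assms by (meson inj_image_eq_iff inj_onI)
  hence "(\<Sum>e\<in>(\<lambda>e. f ` e) ` E. \<Prod>x\<in>e. y x) = (\<Sum>e\<in>E. \<Prod>x\<in>f ` e. y x)"
    by (simp add: sum.reindex)
  also have "\<dots> = (\<Sum>e\<in>E. \<Prod>x\<in>e. y (f x))"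
    using assms by (intro sum.cong refl) (simp add: prod.reindex inj_on_subset[OF assms])
  finally show ?thesis .
qed

lemma verts_dunion: "verts (dunion A B) = Inl ` verts A \<union> Inr ` verts B"
  by (simp add: dunion_def verts_def)
lemma edges_dunion: "edges (dunion A B) = (\<lambda>e. Inl ` e) ` edges A \<union> (\<lambda>e. Inr ` e) ` edges B"
  by (simp add: dunion_def edges_def)

lemma uniform_dunion: assumes A: "uniform_hg r A" and B: "uniform_hg r B" shows "uniform_hg r (dunion A B)"
proof -
  show ?thesis unfolding uniform_hg_def verts_dunion edges_dunion
  proof (rule conjI[OF _ ballI])
    show "finite (Inl ` verts A \<union> Inr ` verts B)" using A B by (simp add: uniform_hg_def)
    fix e assume "e \<in> (\<lambda>e. Inl ` e) ` edges A \<union> (\<lambda>e. Inr ` e) ` edges B"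
    thus "e \<subseteq> Inl ` verts A \<union> Inr ` verts B \<and> card e = r"
    proof
      assume "e \<in> (\<lambda>e. Inl ` e) ` edges A"
      then obtain f where f: "f \<in> edges A" "e = Inl ` f" by blast
      have "card e = card f" unfolding f(2) by (rule card_image) simp
      moreover have "f \<subseteq> verts A" "card f = r" using A f(1) by (auto simp: uniform_hg_def)
      ultimately show ?thesis using f(2) by blast
    next
      assume "e \<in> (\<lambda>e. Inr ` e) ` edges B"
      then obtain f where f: "f \<in> edges B" "e = Inr ` f" by blast
      have "card e = card f" unfolding f(2) by (rule card_image) simp
      moreover have "f \<subseteq> verts B" "card f = r" using B f(1) by (auto simp: uniform_hg_def)
      ultimately show ?thesis using f(2) by blast
    qed
  qed
qed

lemma FF_dunion:
  assumes "uniform_hg r A" "uniform_hg r B" "r \<ge> 1"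
  shows "FF (dunion A B) y = FF A (\<lambda>a. y (Inl a)) + FF B (\<lambda>b. y (Inr b))"
proof -
  have d: "(\<lambda>e. Inl ` e) ` edges A \<inter> (\<lambda>e. Inr ` e) ` edges B = {}"
    using uniform_edge_ne[OF assms(1,3)] by fastforce
  show ?thesis unfolding FF_def edges_dunion
    using uniform_finite_edges[OF assms(1)] uniform_finite_edges[OF assms(2)] d
    by (simp add: sum.union_disjoint sum_prod_img)
qed

lemma NN_dunion:
  assumes "uniform_hg r A" "uniform_hg r B"
  shows "NN r (dunion A B) y = NN r A (\<lambda>a. y (Inl a)) + NN r B (\<lambda>b. y (Inr b))"
  unfolding NN_def verts_dunion using assms
  by (subst sum.union_disjoint) (auto simp: uniform_hg_def sum.reindex)

lemma verts_copies: "verts (copies k K) = {..<k} \<times> verts K"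
  by (simp add: copies_def verts_def)
lemma edges_copies: "edges (copies k K) = (\<Union>i<k. (\<lambda>e. Pair i ` e) ` edges K)"
  by (auto simp: copies_def edges_def)

lemma uniform_copies: "uniform_hg r K \<Longrightarrow> uniform_hg r (copies k K)"
  unfolding uniform_hg_def verts_copies edges_copies
  by (auto simp: card_image inj_on_def)

lemma FF_copies:
  assumes "uniform_hg r K" "r \<ge> 1"
  shows "FF (copies k K) y = (\<Sum>i<k. FF K (\<lambda>x. y (i, x)))"
proof -
  have "FF (copies k K) y = (\<Sum>i<k. \<Sum>e\<in>(\<lambda>e. Pair i ` e) ` edges K. \<Prod>x\<in>e. y x)"
    unfolding FF_def edges_copies
  proof (rule sum.UNION_disjoint)
    show "finite {..<k}" by simp
    show "\<forall>i\<in>{..<k}. finite ((\<lambda>e. Pair i ` e) ` edges K)" using uniform_finite_edges[OF assms(1)] by simp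
    show "\<forall>i\<in>{..<k}. \<forall>j\<in>{..<k}. i \<noteq> j \<longrightarrow> (\<lambda>e. Pair i ` e) ` edges K \<inter> (\<lambda>e. Pair j ` e) ` edges K = {}"
      using uniform_edge_ne[OF assms] by fastforce
  qed
  also have "\<dots> = (\<Sum>i<k. FF K (\<lambda>x. y (i, x)))"
    unfolding FF_def by (intro sum.cong refl sum_prod_img) (simp add: inj_on_def)
  finally show ?thesis .
qed

lemma NN_copies: "NN r (copies k K) y = (\<Sum>i<k. NN r K (\<lambda>x. y (i, x)))"
  unfolding NN_def verts_copies by (simp add: sum.cartesian_product)

definition conn :: "nat \<Rightarrow> 'a \<Rightarrow> 'b \<Rightarrow> nat \<Rightarrow> ('a + (nat \<times> 'b) + (nat \<times> nat)) set" where
  "conn r u v i = {Inl u, Inr (Inl (i,v))} \<union> (\<lambda>j. Inr (Inr (i,j))) ` {2..r-1}"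

lemma verts_coal: "verts (coalesce r G u m H v) = Inl ` verts G \<union> (\<lambda>(i,h). Inr (Inl (i,h))) ` ({..<m} \<times> verts H)
       \<union> (\<lambda>(i,j). Inr (Inr (i,j))) ` ({..<m} \<times> {2..r-1})"
  by (simp add: coalesce_def verts_def)

lemma edges_coal: "edges (coalesce r G u m H v) = (\<lambda>e. Inl ` e) ` edges G
   \<union> (\<Union>i<m. (\<lambda>e. (\<lambda>h. Inr (Inl (i,h))) ` e) ` edges H) \<union> conn r u v ` {..<m}"
  by (auto simp: coalesce_def edges_def conn_def)

lemma card_conn: fixes u :: 'a and v :: 'b assumes r: "r \<ge> 2" shows "card (conn r u v i) = r"
proof -
  let ?S = "(\<lambda>j. Inr (Inr (i,j)) :: ('a + (nat \<times> 'b) + (nat \<times> nat))) ` {2..r-1}"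
  have cS: "card ?S = r - 2"
    by (subst card_image) (auto simp: inj_on_def)
  have e: "conn r u v i = insert (Inl u) (insert (Inr (Inl (i,v))) ?S)"
    by (simp add: conn_def)
  have n1: "Inl u \<notin> insert (Inr (Inl (i,v))) ?S" by auto
  have n2: "Inr (Inl (i,v)) \<notin> ?S" by auto
  have f: "finite ?S" by simp
  have c1: "card (insert (Inr (Inl (i,v))) ?S) = Suc (card ?S)" using f n2 by (rule card_insert_disjoint)
  have "card (conn r u v i) = Suc (card (insert (Inr (Inl (i,v))) ?S))"
    unfolding e using f n1 by (intro card_insert_disjoint) auto
  hence "card (conn r u v i) = Suc (Suc (card ?S))" using c1 by simp
  thus ?thesis using cS r by simp
qed

lemma conn_inj: "conn r u v i = conn r u v j \<Longrightarrow> i = j"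
proof -
  assume "conn r u v i = conn r u v j"
  moreover have "Inr (Inl (i,v)) \<in> conn r u v i" by (simp add: conn_def)
  ultimately have "Inr (Inl (i,v)) \<in> conn r u v j" by simp
  thus "i = j" by (auto simp: conn_def)
qed

lemma prod_conn: fixes u :: 'a and v :: 'b shows "(\<Prod>x\<in>conn r u v i. y x) = y (Inl u) * y (Inr (Inl (i,v))) * (\<Prod>j\<in>{2..r-1}. y (Inr (Inr (i,j))))"
proof -
  let ?S = "(\<lambda>j. Inr (Inr (i,j)) :: ('a + (nat \<times> 'b) + (nat \<times> nat))) ` {2..r-1}"
  have e: "conn r u v i = insert (Inl u) (insert (Inr (Inl (i,v))) ?S)"
    by (simp add: conn_def)
  have n1: "Inl u \<notin> insert (Inr (Inl (i,v))) ?S" by auto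
  have n2: "Inr (Inl (i,v)) \<notin> ?S" by auto
  have f: "finite ?S" by simp
  have p: "(\<Prod>x\<in>?S. y x) = (\<Prod>j\<in>{2..r-1}. y (Inr (Inr (i,j))))"
    by (subst prod.reindex) (auto simp: inj_on_def)
  have "(\<Prod>x\<in>conn r u v i. y x) = y (Inl u) * (\<Prod>x\<in>insert (Inr (Inl (i,v))) ?S. y x)"
    unfolding e using f n1 by (intro prod.insert) auto
  also have "(\<Prod>x\<in>insert (Inr (Inl (i,v))) ?S. y x) = y (Inr (Inl (i,v))) * (\<Prod>x\<in>?S. y x)"
    using f n2 by (rule prod.insert)
  finally show ?thesis unfolding p by (simp add: mult.assoc)
qed

lemma uniform_coal:
  fixes u :: 'a and v :: 'b
  assumes G: "uniform_hg r G" and H: "uniform_hg r H" and r: "r \<ge> 2" and u: "u \<in> verts G" and v: "v \<in> verts H"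
  shows "uniform_hg r (coalesce r G u m H v)"
  unfolding uniform_hg_def
proof (rule conjI[OF _ ballI])
  let ?V = "verts (coalesce r G u m H v)"
  have VG: "Inl ` verts G \<subseteq> ?V" unfolding verts_coal by blast
  have VH: "(\<lambda>(i,h). Inr (Inl (i,h))) ` ({..<m} \<times> verts H) \<subseteq> ?V" unfolding verts_coal by blast
  have VC: "(\<lambda>(i,j). Inr (Inr (i,j))) ` ({..<m} \<times> {2..r-1}) \<subseteq> ?V" unfolding verts_coal by blast
  have fG: "finite (verts G)" and fH: "finite (verts H)" using G H by (auto simp: uniform_hg_def)
  show "finite ?V" unfolding verts_coal using fG fH by simp
  fix e assume "e \<in> edges (coalesce r G u m H v)"
  hence "e \<in> (\<lambda>e. Inl ` e) ` edges G \<or> (\<exists>i<m. e \<in> (\<lambda>e. (\<lambda>h. Inr (Inl (i,h))) ` e) ` edges H) \<or> e \<in> conn r u v ` {..<m}"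
    unfolding edges_coal by blast
  thus "e \<subseteq> ?V \<and> card e = r"
  proof (elim disjE exE conjE)
    assume "e \<in> (\<lambda>e. Inl ` e) ` edges G"
    then obtain f where f: "f \<in> edges G" "e = Inl ` f" by auto
    have fG: "f \<subseteq> verts G" "card f = r" using G f(1) by (auto simp: uniform_hg_def)
    have "card e = card f" unfolding f(2) by (rule card_image) simp
    moreover have "e \<subseteq> Inl ` verts G" unfolding f(2) using fG(1) by (rule image_mono)
    ultimately show ?thesis using VG fG by auto
  next
    fix i assume i: "i < m" "e \<in> (\<lambda>e. (\<lambda>h. Inr (Inl (i,h))) ` e) ` edges H"
    then obtain f where f: "f \<in> edges H" "e = (\<lambda>h. Inr (Inl (i,h))) ` f" by auto
    have fH: "f \<subseteq> verts H" "card f = r" using H f(1) by (auto simp: uniform_hg_def)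
    have "card e = card f" unfolding f(2) by (rule card_image) (auto simp: inj_on_def)
    moreover have "e \<subseteq> (\<lambda>(i,h). Inr (Inl (i,h))) ` ({..<m} \<times> verts H)"
    proof
      fix x assume "x \<in> e"
      then obtain h where h: "h \<in> f" "x = Inr (Inl (i,h))" unfolding f(2) by blast
      show "x \<in> (\<lambda>(i,h). Inr (Inl (i,h))) ` ({..<m} \<times> verts H)"
        by (rule image_eqI[of _ _ "(i,h)"]) (use h i fH in auto)
    qed
    ultimately show ?thesis using VH fH by auto
  next
    assume "e \<in> conn r u v ` {..<m}"
    then obtain i where i: "i < m" "e = conn r u v i" by auto
    have "e \<subseteq> ?V"
    proof
      fix x assume "x \<in> e"
      hence "x = Inl u \<or> x = Inr (Inl (i,v)) \<or> (\<exists>j\<in>{2..r-1}. x = Inr (Inr (i,j)))"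
        unfolding i conn_def by blast
      thus "x \<in> ?V"
      proof (elim disjE bexE)
        assume "x = Inl u" thus ?thesis using VG u by blast
      next
        assume "x = Inr (Inl (i,v))"
        moreover have "Inr (Inl (i,v)) \<in> (\<lambda>(i,h). Inr (Inl (i,h))) ` ({..<m} \<times> verts H)"
          by (rule image_eqI[of _ _ "(i,v)"]) (use i v in auto)
        ultimately show ?thesis using VH by blast
      next
        fix j assume j: "j \<in> {2..r-1}" "x = Inr (Inr (i,j))"
        have "Inr (Inr (i,j)) \<in> (\<lambda>(i,j). Inr (Inr (i,j))) ` ({..<m} \<times> {2..r-1})"
          by (rule image_eqI[of _ _ "(i,j)"]) (use i j in auto)
        thus ?thesis using VC j by blast
      qed
    qed
    thus ?thesis using card_conn[OF r] i by simp
  qed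
qed

lemma FF_coal:
  assumes G: "uniform_hg r G" and H: "uniform_hg r H" and r: "r \<ge> 2"
  shows "FF (coalesce r G u m H v) y = FF G (\<lambda>g. y (Inl g))
     + (\<Sum>i<m. FF H (\<lambda>h. y (Inr (Inl (i,h)))) + y (Inl u) * y (Inr (Inl (i,v))) * (\<Prod>j\<in>{2..r-1}. y (Inr (Inr (i,j)))))"
proof -
  let ?A = "(\<lambda>e. Inl ` e) ` edges G :: ('a + (nat \<times> 'b) + (nat \<times> nat)) set set"
  let ?B = "(\<Union>i<m. (\<lambda>e. (\<lambda>h. Inr (Inl (i,h))) ` e) ` edges H) :: ('a + (nat \<times> 'b) + (nat \<times> nat)) set set"
  let ?C = "conn r u v ` {..<m}"
  have r1: "r \<ge> 1" using r by simp
  have fA: "finite ?A" and fB: "finite ?B" and fC: "finite ?C"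
    using uniform_finite_edges[OF G] uniform_finite_edges[OF H] by auto
  have dAB: "?A \<inter> ?B = {}" using uniform_edge_ne[OF G r1] by fastforce
  have dAC: "?A \<inter> ?C = {}" by (auto simp: conn_def)
  have dBC: "?B \<inter> ?C = {}" by (auto simp: conn_def)
  have "FF (coalesce r G u m H v) y = (\<Sum>e\<in>?A. \<Prod>x\<in>e. y x) + (\<Sum>e\<in>?B. \<Prod>x\<in>e. y x) + (\<Sum>e\<in>?C. \<Prod>x\<in>e. y x)"
    unfolding FF_def edges_coal using fA fB fC dAB dAC dBC
    by (simp add: sum.union_disjoint Int_Un_distrib2)
  also have "(\<Sum>e\<in>?A. \<Prod>x\<in>e. y x) = FF G (\<lambda>g. y (Inl g))"
    unfolding FF_def by (rule sum_prod_img) simp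
  also have "(\<Sum>e\<in>?B. \<Prod>x\<in>e. y x) = (\<Sum>i<m. \<Sum>e\<in>(\<lambda>e. (\<lambda>h. Inr (Inl (i,h))) ` e) ` edges H. \<Prod>x\<in>e. y x)"
  proof (rule sum.UNION_disjoint)
    show "finite {..<m}" by simp
    show "\<forall>i\<in>{..<m}. finite ((\<lambda>e. (\<lambda>h. Inr (Inl (i,h))) ` e) ` edges H :: ('a + (nat \<times> 'b) + (nat \<times> nat)) set set)"
      using uniform_finite_edges[OF H] by simp
    show "\<forall>i\<in>{..<m}. \<forall>j\<in>{..<m}. i \<noteq> j \<longrightarrow> ((\<lambda>e. (\<lambda>h. Inr (Inl (i,h))) ` e) ` edges H :: ('a + (nat \<times> 'b) + (nat \<times> nat)) set set) \<inter> (\<lambda>e. (\<lambda>h. Inr (Inl (j,h))) ` e) ` edges H = {}"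
      using uniform_edge_ne[OF H r1] by fastforce
  qed
  also have "\<dots> = (\<Sum>i<m. FF H (\<lambda>h. y (Inr (Inl (i,h)))))"
    unfolding FF_def by (intro sum.cong refl sum_prod_img) (simp add: inj_on_def)
  also have "(\<Sum>e\<in>?C. \<Prod>x\<in>e. y x) = (\<Sum>i<m. \<Prod>x\<in>conn r u v i. y x)"
    by (subst sum.reindex) (auto simp: inj_on_def dest: conn_inj)
  also have "\<dots> = (\<Sum>i<m. y (Inl u) * y (Inr (Inl (i,v))) * (\<Prod>j\<in>{2..r-1}. y (Inr (Inr (i,j)))))"
    by (simp add: prod_conn)
  finally show ?thesis by (simp add: sum.distrib add.assoc)
qed

lemma NN_coal:
  assumes G: "uniform_hg r G" and H: "uniform_hg r H"
  shows "NN r (coalesce r G u m H v) y = NN r G (\<lambda>g. y (Inl g))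
     + (\<Sum>i<m. NN r H (\<lambda>h. y (Inr (Inl (i,h)))) + (\<Sum>j\<in>{2..r-1}. y (Inr (Inr (i,j))) ^ r))"
proof -
  let ?A = "Inl ` verts G :: ('a + (nat \<times> 'b) + (nat \<times> nat)) set"
  let ?B = "(\<lambda>(i,h). Inr (Inl (i,h))) ` ({..<m} \<times> verts H) :: ('a + (nat \<times> 'b) + (nat \<times> nat)) set"
  let ?C = "(\<lambda>(i,j). Inr (Inr (i,j))) ` ({..<m} \<times> {2..r-1}) :: ('a + (nat \<times> 'b) + (nat \<times> nat)) set"
  have fG: "finite (verts G)" and fH: "finite (verts H)" using G H by (auto simp: uniform_hg_def)
  have "NN r (coalesce r G u m H v) y = (\<Sum>x\<in>?A. y x ^ r) + (\<Sum>x\<in>?B. y x ^ r) + (\<Sum>x\<in>?C. y x ^ r)"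
    unfolding NN_def verts_coal using fG fH
    by (subst sum.union_disjoint, force, force, force)+ simp
  also have "(\<Sum>x\<in>?A. y x ^ r) = NN r G (\<lambda>g. y (Inl g))"
    unfolding NN_def by (subst sum.reindex) auto
  also have "(\<Sum>x\<in>?B. y x ^ r) = (\<Sum>p\<in>{..<m} \<times> verts H. y (Inr (Inl p)) ^ r)"
    by (subst sum.reindex) (auto simp: inj_on_def case_prod_unfold)
  also have "\<dots> = (\<Sum>i<m. NN r H (\<lambda>h. y (Inr (Inl (i,h)))))"
    unfolding NN_def by (simp add: sum.cartesian_product)
  also have "(\<Sum>x\<in>?C. y x ^ r) = (\<Sum>p\<in>{..<m} \<times> {2..r-1}. y (Inr (Inr p)) ^ r)"
    by (subst sum.reindex) (auto simp: inj_on_def case_prod_unfold)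
  also have "\<dots> = (\<Sum>i<m. \<Sum>j\<in>{2..r-1}. y (Inr (Inr (i,j))) ^ r)"
    by (simp add: sum.cartesian_product)
  finally show ?thesis by (simp add: sum.distrib add.assoc)
qed

lemma FF_cong: "uniform_hg r K \<Longrightarrow> (\<And>i. i \<in> verts K \<Longrightarrow> y i = y' i) \<Longrightarrow> FF K y = FF K y'"
  unfolding FF_def uniform_hg_def by (intro sum.cong refl prod.cong) auto

lemma NN_cong: "(\<And>i. i \<in> verts K \<Longrightarrow> y i = y' i) \<Longrightarrow> NN r K y = NN r K y'"
  unfolding NN_def by (intro sum.cong refl) auto

lemma FF_zero: assumes "uniform_hg r K" "r \<ge> 1" shows "FF K (\<lambda>_. 0) = 0"
  unfolding FF_def
proof (intro sum.neutral ballI)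
  fix e assume e: "e \<in> edges K"
  have "card e > 0" using uniform_edge_ne[OF assms e] uniform_edge_fin[OF assms e] by (simp add: card_gt_0_iff)
  thus "(\<Prod>_\<in>e. 0::real) = 0" by simp
qed

lemma NN_zero: "r \<ge> 1 \<Longrightarrow> NN r K (\<lambda>_. 0) = 0"
  unfolding NN_def by simp

lemma NN_nonneg: "(\<And>i. i \<in> verts K \<Longrightarrow> 0 \<le> y i) \<Longrightarrow> 0 \<le> NN r K y"
  unfolding NN_def by (intro sum_nonneg) auto

lemma hgctx_dunion: assumes "hgctx r A" "uniform_hg r B" shows "hgctx r (dunion A B)"
proof -
  have "uniform_hg r A" "r \<ge> 2" "verts A \<noteq> {}" using assms(1) by (auto simp: hgctx_def)
  thus ?thesis using assms(2) by (simp add: hgctx_def uniform_dunion verts_dunion)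
qed

lemma MM_union:
  fixes A :: "'a hgraph" and B :: "'b hgraph"
  assumes A: "hgctx r A" and B: "uniform_hg r B"
    and bnd: "\<And>y. (\<And>i. i \<in> verts B \<Longrightarrow> 0 \<le> y i) \<Longrightarrow> FF B y \<le> MM r A * NN r B y"
  shows "MM r (dunion A B) = MM r A"
proof -
  interpret A: hgctx r A by (rule A)
  interpret D: hgctx r "dunion A B" by (rule hgctx_dunion[OF A B])
  have r1: "r \<ge> 1" using A.r2 by simp
  show ?thesis
  proof (rule antisym)
    obtain z where zP: "z \<in> PP r (dunion A B)" and zM: "FF (dunion A B) z = MM r (dunion A B)"
      by (rule D.MM_attained)
    have zn: "\<And>x. x \<in> verts (dunion A B) \<Longrightarrow> 0 \<le> z x" using zP by (auto simp: PP_def)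
    have n1: "\<And>a. a \<in> verts A \<Longrightarrow> 0 \<le> z (Inl a)" using zn by (auto simp: verts_dunion)
    have n2: "\<And>b. b \<in> verts B \<Longrightarrow> 0 \<le> z (Inr b)" using zn by (auto simp: verts_dunion)
    have "MM r (dunion A B) = FF A (\<lambda>a. z (Inl a)) + FF B (\<lambda>b. z (Inr b))"
      using zM FF_dunion[OF A.U B r1] by simp
    also have "\<dots> \<le> MM r A * NN r A (\<lambda>a. z (Inl a)) + MM r A * NN r B (\<lambda>b. z (Inr b))"
      using A.FF_le_MM[OF n1] bnd[OF n2] by (rule add_mono)
    also have "\<dots> = MM r A * NN r (dunion A B) z"
      using NN_dunion[OF A.U B] by (simp add: algebra_simps)
    also have "\<dots> = MM r A" using zP by (simp add: PP_def)
    finally show "MM r (dunion A B) \<le> MM r A" .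
  next
    obtain w where wP: "w \<in> PP r A" and wM: "FF A w = MM r A" by (rule A.MM_attained)
    define y :: "'a + 'b \<Rightarrow> real" where "y x = (case x of Inl a \<Rightarrow> (if a \<in> verts A then w a else 0) | Inr b \<Rightarrow> 0)" for x
    have wn: "\<And>a. a \<in> verts A \<Longrightarrow> 0 \<le> w a" using wP by (auto simp: PP_def)
    have y0: "0 \<le> y x" for x using wn by (auto simp: y_def split: sum.splits)
    have F: "FF (dunion A B) y = MM r A"
    proof -
      have "FF (dunion A B) y = FF A (\<lambda>a. y (Inl a)) + FF B (\<lambda>b. y (Inr b))" by (rule FF_dunion[OF A.U B r1])
      also have "FF A (\<lambda>a. y (Inl a)) = FF A w" by (rule FF_cong[OF A.U]) (simp add: y_def)
      also have "FF B (\<lambda>b. y (Inr b)) = 0" using FF_zero[OF B r1] by (simp add: y_def)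
      finally show ?thesis using wM by simp
    qed
    have N: "NN r (dunion A B) y = 1"
    proof -
      have "NN r (dunion A B) y = NN r A (\<lambda>a. y (Inl a)) + NN r B (\<lambda>b. y (Inr b))" by (rule NN_dunion[OF A.U B])
      also have "NN r A (\<lambda>a. y (Inl a)) = NN r A w" by (rule NN_cong) (simp add: y_def)
      also have "NN r B (\<lambda>b. y (Inr b)) = 0" using NN_zero[OF r1] by (simp add: y_def)
      finally show ?thesis using wP by (simp add: PP_def)
    qed
    have "y \<in> PP r (dunion A B)" using y0 N by (simp add: PP_def)
    from D.MM_ge[OF this] F show "MM r A \<le> MM r (dunion A B)" by simp
  qed
qed

lemma copies_bound:
  assumes G: "hgctx r G" and c: "MM r G \<le> c" and y0: "\<And>i. i \<in> verts (copies k G) \<Longrightarrow> 0 \<le> y i"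
  shows "FF (copies k G) y \<le> c * NN r (copies k G) y"
proof -
  interpret G: hgctx r G by (rule G)
  have r1: "r \<ge> 1" using G.r2 by simp
  have "FF (copies k G) y = (\<Sum>i<k. FF G (\<lambda>x. y (i, x)))" by (rule FF_copies[OF G.U r1])
  also have "\<dots> \<le> (\<Sum>i<k. c * NN r G (\<lambda>x. y (i, x)))"
  proof (rule sum_mono)
    fix i assume i: "i \<in> {..<k}"
    have n: "\<And>x. x \<in> verts G \<Longrightarrow> 0 \<le> y (i, x)" using y0 i by (auto simp: verts_copies)
    have "FF G (\<lambda>x. y (i, x)) \<le> MM r G * NN r G (\<lambda>x. y (i, x))" by (rule G.FF_le_MM[OF n])
    also have "\<dots> \<le> c * NN r G (\<lambda>x. y (i, x))" using c NN_nonneg[of G "\<lambda>x. y (i, x)", OF n] by (rule mult_right_mono)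
    finally show "FF G (\<lambda>x. y (i, x)) \<le> c * NN r G (\<lambda>x. y (i, x))" .
  qed
  also have "\<dots> = c * NN r (copies k G) y" by (simp add: NN_copies sum_distrib_left)
  finally show ?thesis .
qed

lemma in_verts_coal1: "Inl g \<in> verts (coalesce r G u m H v) \<longleftrightarrow> g \<in> verts G"
  by (auto simp: verts_coal)
lemma in_verts_coal2: "Inr (Inl (i,h)) \<in> verts (coalesce r G u m H v) \<longleftrightarrow> i < m \<and> h \<in> verts H"
  by (auto simp: verts_coal)
lemma in_verts_coal3: "Inr (Inr (i,j)) \<in> verts (coalesce r G u m H v) \<longleftrightarrow> i < m \<and> j \<in> {2..r-1}"
  by (auto simp: verts_coal)

lemma nonneg_coal:
  assumes "\<And>g. g \<in> verts G \<Longrightarrow> 0 \<le> y (Inl g)"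
    "\<And>i h. i < m \<Longrightarrow> h \<in> verts H \<Longrightarrow> 0 \<le> y (Inr (Inl (i,h)))"
    "\<And>i j. i < m \<Longrightarrow> j \<in> {2..r-1} \<Longrightarrow> 0 \<le> y (Inr (Inr (i,j)))"
  shows "x \<in> verts (coalesce r G u m H v) \<Longrightarrow> 0 \<le> y x"
  using assms by (auto simp: verts_coal)

locale ctx2 =
  fixes r :: nat and G :: "'a hgraph" and u :: 'a and H :: "'b hgraph" and v :: 'b and m :: nat
  assumes UG: "uniform_hg r G" and UH: "uniform_hg r H" and r2: "r \<ge> 2"
    and u: "u \<in> verts G" and v: "v \<in> verts H" and m1: "m \<ge> 1"
begin

lemma hG: "hgctx r G" unfolding hgctx_def using UG r2 u by auto
lemma hH: "hgctx r H" unfolding hgctx_def using UH r2 v by auto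
lemma hT: "hgctx r (coalesce r G u m H v)"
  unfolding hgctx_def using uniform_coal[OF UG UH r2 u v] r2 u by (auto simp: verts_coal)

lemma MM_G_le: "MM r G \<le> MM r (coalesce r G u m H v)"
proof -
  interpret G: hgctx r G by (rule hG)
  interpret T: hgctx r "coalesce r G u m H v" by (rule hT)
  have r1: "r \<ge> 1" using r2 by simp
  obtain z where zP: "z \<in> PP r G" and zM: "FF G z = MM r G" by (rule G.MM_attained)
  have zn: "\<And>g. g \<in> verts G \<Longrightarrow> 0 \<le> z g" using zP by (auto simp: PP_def)
  define y :: "'a + (nat \<times> 'b) + (nat \<times> nat) \<Rightarrow> real"
    where "y x = (case x of Inl g \<Rightarrow> (if g \<in> verts G then z g else 0) | Inr _ \<Rightarrow> 0)" for x
  have y0: "0 \<le> y x" for x using zn by (auto simp: y_def split: sum.splits)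
  have F: "FF (coalesce r G u m H v) y = MM r G"
  proof -
    have A: "FF G (\<lambda>g. y (Inl g)) = FF G z" by (rule FF_cong[OF UG]) (simp add: y_def)
    have h0: "\<And>i. (\<lambda>h. y (Inr (Inl (i,h)))) = (\<lambda>_. 0)" by (simp add: y_def)
    have B: "\<And>i. y (Inr (Inl (i,v))) = 0" by (simp add: y_def)
    show ?thesis unfolding FF_coal[OF UG UH r2] A h0 FF_zero[OF UH r1] B using zM by simp
  qed
  have N: "NN r (coalesce r G u m H v) y = 1"
  proof -
    have A: "NN r G (\<lambda>g. y (Inl g)) = NN r G z" by (rule NN_cong) (simp add: y_def)
    have h0: "\<And>i. (\<lambda>h. y (Inr (Inl (i,h)))) = (\<lambda>_. 0)" by (simp add: y_def)
    have B: "\<And>i j. y (Inr (Inr (i,j))) = 0" by (simp add: y_def)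
    show ?thesis unfolding NN_coal[OF UG UH] A h0 NN_zero[OF r1] B using zP r1 by (simp add: PP_def)
  qed
  have "y \<in> PP r (coalesce r G u m H v)" using y0 N by (simp add: PP_def)
  from T.MM_ge[OF this] F show ?thesis by simp
qed

lemma MM_coal_le: "MM r (coalesce r G u m H v) \<le> MM r (coalesce r H v m G u)"
proof -
  interpret G: hgctx r G by (rule hG)
  interpret H: hgctx r H by (rule hH)
  interpret T: hgctx r "coalesce r G u m H v" by (rule hT)
  have hT2: "hgctx r (coalesce r H v m G u)"
    unfolding hgctx_def using uniform_coal[OF UH UG r2 v u] r2 v by (auto simp: verts_coal)
  interpret T2: hgctx r "coalesce r H v m G u" by (rule hT2)
  have r1: "r \<ge> 1" using r2 by simp
  obtain y where yP: "y \<in> PP r (coalesce r G u m H v)" and yM: "FF (coalesce r G u m H v) y = MM r (coalesce r G u m H v)"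
    by (rule T.MM_attained)
  define M1 where "M1 = MM r (coalesce r G u m H v)"
  have yn: "\<And>x. x \<in> verts (coalesce r G u m H v) \<Longrightarrow> 0 \<le> y x" using yP by (auto simp: PP_def)
  have yN: "NN r (coalesce r G u m H v) y = 1" using yP by (auto simp: PP_def)
  define g where "g x = y (Inl x)" for x
  define h where "h k x = y (Inr (Inl (k,x)))" for k x
  define w where "w k j = y (Inr (Inr (k,j)))" for k j
  define J where "J = {2..r-1}"
  define Cn where "Cn k = g u * h k v * (\<Prod>j\<in>J. w k j)" for k
  define Wn where "Wn k = (\<Sum>j\<in>J. w k j ^ r)" for k
  define a where "a k = FF G g / m + FF H (h k) + Cn k" for k
  define b where "b k = NN r G g / m + NN r H (h k) + Wn k" for k
  have gn: "\<And>x. x \<in> verts G \<Longrightarrow> 0 \<le> g x" unfolding g_def using yn by (simp add: in_verts_coal1)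
  have hn: "\<And>k x. k < m \<Longrightarrow> x \<in> verts H \<Longrightarrow> 0 \<le> h k x" unfolding h_def using yn by (simp add: in_verts_coal2)
  have wn: "\<And>k j. k < m \<Longrightarrow> j \<in> J \<Longrightarrow> 0 \<le> w k j" unfolding w_def J_def using yn by (simp add: in_verts_coal3)
  have mpos: "real m > 0" using m1 by simp
  have sumA: "(\<Sum>k<m. a k) = M1"
  proof -
    have "(\<Sum>k<m. a k) = FF G g + (\<Sum>k<m. FF H (h k) + Cn k)"
      unfolding a_def using mpos by (simp add: sum.distrib add.assoc)
    also have "\<dots> = FF (coalesce r G u m H v) y"
      unfolding FF_coal[OF UG UH r2] g_def h_def Cn_def w_def J_def by simp
    finally show ?thesis using yM M1_def by simp
  qed
  have sumB: "(\<Sum>k<m. b k) = 1"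
  proof -
    have "(\<Sum>k<m. b k) = NN r G g + (\<Sum>k<m. NN r H (h k) + Wn k)"
      unfolding b_def using mpos by (simp add: sum.distrib add.assoc)
    also have "\<dots> = NN r (coalesce r G u m H v) y"
      unfolding NN_coal[OF UG UH] g_def h_def Wn_def w_def J_def by simp
    finally show ?thesis using yN by simp
  qed
  have NGn: "0 \<le> NN r G g" using gn by (rule NN_nonneg)
  have NHn: "k < m \<Longrightarrow> 0 \<le> NN r H (h k)" for k using hn[of k] by (intro NN_nonneg) auto
  have Wnn: "k < m \<Longrightarrow> 0 \<le> Wn k" for k unfolding Wn_def using wn by (intro sum_nonneg) auto
  have b0: "k < m \<Longrightarrow> 0 \<le> b k" for k unfolding b_def using NGn NHn Wnn mpos by simp
  have M1n: "0 \<le> M1" unfolding M1_def by (rule T.MM_nonneg)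
  have ab: "k < m \<Longrightarrow> b k = 0 \<Longrightarrow> a k \<le> 0" for k
  proof -
    assume k: "k < m" and bk: "b k = 0"
    have NG0: "NN r G g = 0" and NH0: "NN r H (h k) = 0"
      using bk NGn NHn[OF k] Wnn[OF k] mpos unfolding b_def by (auto simp: add_nonneg_eq_0_iff)
    have "FF G g \<le> MM r G * NN r G g" by (rule G.FF_le_MM[OF gn])
    hence FG: "FF G g \<le> 0" using NG0 by simp
    have "FF H (h k) \<le> MM r H * NN r H (h k)" by (rule H.FF_le_MM) (use hn k in auto)
    hence FH: "FF H (h k) \<le> 0" using NH0 by simp
    have "g u ^ r \<le> NN r G g" unfolding NN_def by (rule member_le_sum) (use u gn G.finV in auto)
    moreover have "0 \<le> g u ^ r" using gn[OF u] by simp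
    ultimately have "g u ^ r = 0" using NG0 by simp
    hence "g u = 0" using r2 by simp
    hence "Cn k = 0" by (simp add: Cn_def)
    moreover have "FF G g / m \<le> 0" using FG mpos by (simp add: divide_nonpos_pos)
    ultimately show "a k \<le> 0" using FH unfolding a_def by simp
  qed
  have "\<exists>k<m. 0 < b k \<and> M1 * b k \<le> a k"
  proof (rule ccontr)
    assume "\<not> ?thesis"
    hence H1: "\<And>k. k < m \<Longrightarrow> 0 < b k \<Longrightarrow> a k < M1 * b k" by force
    have le: "\<And>k. k \<in> {..<m} \<Longrightarrow> a k \<le> M1 * b k"
    proof -
      fix k assume "k \<in> {..<m}"
      hence k: "k < m" by simp
      show "a k \<le> M1 * b k"
      proof (cases "b k = 0")
        case True thus ?thesis using ab[OF k] by simp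
      next
        case False thus ?thesis using H1[OF k] b0[OF k] by force
      qed
    qed
    obtain k0 where k0: "k0 < m" "0 < b k0"
    proof (rule ccontr)
      assume "\<not> thesis"
      hence "\<And>k. k < m \<Longrightarrow> b k \<le> 0" using that by force
      hence "(\<Sum>k<m. b k) \<le> 0" by (intro sum_nonpos) auto
      thus False using sumB by simp
    qed
    have "(\<Sum>k<m. a k) < (\<Sum>k<m. M1 * b k)"
      by (rule sum_strict_mono_ex1) (use le H1 k0 in auto)
    thus False using sumA sumB by (simp add: sum_distrib_left[symmetric])
  qed
  then obtain k where k: "k < m" "0 < b k" "M1 * b k \<le> a k" by blast
  define s where "s = root r (real m)"
  have s0: "s > 0" unfolding s_def using mpos r2 by simp
  have sr: "s ^ r = real m" unfolding s_def using mpos r2 by (intro real_root_pow_pos2) auto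
  define z :: "'b + (nat \<times> 'a) + (nat \<times> nat) \<Rightarrow> real" where
    "z x = (case x of Inl x \<Rightarrow> s * h k x | Inr (Inl (i,x)) \<Rightarrow> (1 / s) * g x | Inr (Inr (i,j)) \<Rightarrow> w k j)" for x
  have zn: "\<And>x. x \<in> verts (coalesce r H v m G u) \<Longrightarrow> 0 \<le> z x"
    by (rule nonneg_coal) (use s0 hn gn wn k J_def in \<open>auto simp: z_def\<close>)
  have FZ: "FF (coalesce r H v m G u) z = m * a k"
  proof -
    have "FF (coalesce r H v m G u) z = FF H (\<lambda>x. s * h k x)
       + (\<Sum>i<m. FF G (\<lambda>x. (1 / s) * g x) + (s * h k v) * ((1 / s) * g u) * (\<Prod>j\<in>J. w k j))"
      unfolding FF_coal[OF UH UG r2] J_def by (simp add: z_def)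
    also have "FF H (\<lambda>x. s * h k x) = m * FF H (h k)" using H.FF_scale sr by simp
    also have "FF G (\<lambda>x. (1 / s) * g x) = FF G g / m"
    proof -
      have "FF G (\<lambda>x. (1 / s) * g x) = (1 / s) ^ r * FF G g" by (rule G.FF_scale)
      also have "(1 / s) ^ r = 1 / m" using sr by (simp add: power_divide)
      finally show ?thesis by simp
    qed
    also have "(s * h k v) * ((1 / s) * g u) * (\<Prod>j\<in>J. w k j) = Cn k" using s0 by (simp add: Cn_def)
    finally show ?thesis using mpos by (simp add: a_def algebra_simps)
  qed
  have NZ: "NN r (coalesce r H v m G u) z = m * b k"
  proof -
    have "NN r (coalesce r H v m G u) z = NN r H (\<lambda>x. s * h k x)
       + (\<Sum>i<m. NN r G (\<lambda>x. (1 / s) * g x) + (\<Sum>j\<in>J. w k j ^ r))"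
      unfolding NN_coal[OF UH UG] J_def by (simp add: z_def)
    also have "NN r H (\<lambda>x. s * h k x) = m * NN r H (h k)" using H.NN_scale sr by simp
    also have "NN r G (\<lambda>x. (1 / s) * g x) = NN r G g / m"
    proof -
      have "NN r G (\<lambda>x. (1 / s) * g x) = (1 / s) ^ r * NN r G g" by (rule G.NN_scale)
      also have "(1 / s) ^ r = 1 / m" using sr by (simp add: power_divide)
      finally show ?thesis by simp
    qed
    finally show ?thesis using mpos by (simp add: b_def Wn_def algebra_simps)
  qed
  have "M1 * (m * b k) \<le> m * a k" using k(3) mpos by (simp add: mult.left_commute)
  also have "\<dots> \<le> MM r (coalesce r H v m G u) * (m * b k)"
  proof -
    have "FF (coalesce r H v m G u) z \<le> MM r (coalesce r H v m G u) * NN r (coalesce r H v m G u) z"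
      by (rule T2.FF_le_MM) (rule zn)
    thus ?thesis using FZ NZ by simp
  qed
  finally have "M1 * (m * b k) \<le> MM r (coalesce r H v m G u) * (m * b k)" .
  moreover have "m * b k > 0" using mpos k(2) by simp
  ultimately show ?thesis unfolding M1_def by (rule mult_right_le_imp_le)
qed

end

definition sig :: "nat \<Rightarrow> nat \<Rightarrow> nat" where "sig i k = (if k < i then k else Suc k)"
definition tau :: "nat \<Rightarrow> nat \<Rightarrow> nat" where "tau i k = (if k < i then k else k - 1)"

definition psi :: "nat \<Rightarrow> ('a + (nat \<times> 'b) + (nat \<times> nat)) + (nat \<times> 'a)
                      \<Rightarrow> ('b + (nat \<times> 'a) + (nat \<times> nat)) + (nat \<times> 'b)" where
  "psi i x = (case x of
      Inl (Inl g) \<Rightarrow> Inl (Inr (Inl (i, g)))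
    | Inl (Inr (Inl (i', h))) \<Rightarrow> (if i' = i then Inl (Inl h) else Inr (tau i i', h))
    | Inl (Inr (Inr p)) \<Rightarrow> Inl (Inr (Inr p))
    | Inr (k, g) \<Rightarrow> Inl (Inr (Inl (sig i k, g))))"

lemma psi_simps [simp]:
  "psi i (Inl (Inl g)) = Inl (Inr (Inl (i, g)))"
  "psi i (Inl (Inr (Inl (i', h)))) = (if i' = i then Inl (Inl h) else Inr (tau i i', h))"
  "psi i (Inl (Inr (Inr p))) = Inl (Inr (Inr p))"
  "psi i (Inr (k, g)) = Inl (Inr (Inl (sig i k, g)))"
  by (simp_all add: psi_def)

lemma sig_tau: "k \<noteq> i \<Longrightarrow> sig i (tau i k) = k" by (auto simp: sig_def tau_def)
lemma tau_sig: "tau i (sig i k) = k" by (auto simp: sig_def tau_def)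
lemma sig_ne: "sig i k \<noteq> i" by (auto simp: sig_def)

lemma psi_psi [simp]: "psi i (psi i x) = x"
proof (cases x)
  case (Inl a)
  show ?thesis
  proof (cases a)
    case (Inl g) thus ?thesis using \<open>x = Inl a\<close> by simp
  next
    case (Inr b)
    show ?thesis
    proof (cases b)
      case (Inl p) thus ?thesis using \<open>x = Inl a\<close> \<open>a = Inr b\<close> by (cases p) (auto simp: sig_tau)
    next
      case (Inr p) thus ?thesis using \<open>x = Inl a\<close> \<open>a = Inr b\<close> by simp
    qed
  qed
next
  case (Inr p) thus ?thesis by (cases p) (simp add: sig_ne tau_sig)
qed

lemma inj_psi: "inj (psi i)" by (metis injI psi_psi)

lemma psi_img_img [simp]: "psi i ` psi i ` A = A"
  by (simp add: image_comp comp_def)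

definition MS :: "'c hgraph \<Rightarrow> nat \<Rightarrow> 'c set set set" where
  "MS K k = {M. M \<subseteq> edges K \<and> card M = k \<and> (\<forall>e\<in>M. \<forall>f\<in>M. e \<noteq> f \<longrightarrow> e \<inter> f = {})}"

lemma match_count_MS: "match_count K k = card (MS K k)"
  by (simp add: match_count_def MS_def)

lemma coal_edge_G: "f \<in> edges G \<Longrightarrow> Inl ` f \<in> edges (coalesce r G u m H v)"
  unfolding edges_coal by (intro UnI1 imageI)
lemma coal_edge_H: "i < m \<Longrightarrow> f \<in> edges H \<Longrightarrow> (\<lambda>h. Inr (Inl (i,h))) ` f \<in> edges (coalesce r G u m H v)"
  unfolding edges_coal by (intro UnI1 UnI2 UN_I[of i] imageI) auto
lemma coal_edge_C: "i < m \<Longrightarrow> conn r u v i \<in> edges (coalesce r G u m H v)"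
  unfolding edges_coal by (intro UnI2 imageI) auto
lemma dunion_edge_L: "X \<in> edges A \<Longrightarrow> Inl ` X \<in> edges (dunion A B)"
  unfolding edges_dunion by (intro UnI1 imageI)
lemma dunion_edge_R: "X \<in> edges B \<Longrightarrow> Inr ` X \<in> edges (dunion A B)"
  unfolding edges_dunion by (intro UnI2 imageI)
lemma copies_edge: "k < n \<Longrightarrow> f \<in> edges K \<Longrightarrow> Pair k ` f \<in> edges (copies n K)"
  unfolding edges_copies by (intro UN_I[of k] imageI) auto

lemma sig_lt: "i < m \<Longrightarrow> k < m - 1 \<Longrightarrow> sig i k < m" by (auto simp: sig_def)
lemma tau_lt: "i < m \<Longrightarrow> k < m \<Longrightarrow> k \<noteq> i \<Longrightarrow> tau i k < m - 1" by (auto simp: tau_def)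

lemma psi_conn: "psi i ` (Inl ` conn r u v i) = Inl ` conn r v u i"
  by (simp add: conn_def image_Un image_image insert_commute)

locale ctx3 = ctx2 +
  assumes r3: "r \<ge> 3"
begin

abbreviation "LL \<equiv> dunion (coalesce r G u m H v) (copies (m - 1) G)"
abbreviation "RR \<equiv> dunion (coalesce r H v m G u) (copies (m - 1) H)"

lemma edges_LL_cases:
  assumes "e \<in> edges LL"
  obtains (G) f where "f \<in> edges G" "e = Inl ` Inl ` f"
    | (H) i f where "i < m" "f \<in> edges H" "e = Inl ` (\<lambda>h. Inr (Inl (i,h))) ` f"
    | (C) i where "i < m" "e = Inl ` conn r u v i"
    | (K) k f where "k < m - 1" "f \<in> edges G" "e = Inr ` Pair k ` f"
proof -
  from assms have "e \<in> (\<lambda>e. Inl ` e) ` edges (coalesce r G u m H v) \<or> e \<in> (\<lambda>e. Inr ` e) ` edges (copies (m - 1) G)"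
    unfolding edges_dunion by (rule UnE) simp_all
  thus thesis
  proof
    assume "e \<in> (\<lambda>e. Inl ` e) ` edges (coalesce r G u m H v)"
    then obtain X where X: "X \<in> edges (coalesce r G u m H v)" "e = Inl ` X" by (rule imageE)
    from X(1) have "X \<in> (\<lambda>e. Inl ` e) ` edges G \<or> X \<in> (\<Union>i<m. (\<lambda>e. (\<lambda>h. Inr (Inl (i,h))) ` e) ` edges H) \<or> X \<in> conn r u v ` {..<m}"
      unfolding edges_coal by blast
    thus thesis
    proof (elim disjE)
      assume "X \<in> (\<lambda>e. Inl ` e) ` edges G"
      then obtain f where "f \<in> edges G" "X = Inl ` f" by (rule imageE)
      thus thesis using G X(2) by blast
    next
      assume "X \<in> (\<Union>i<m. (\<lambda>e. (\<lambda>h. Inr (Inl (i,h))) ` e) ` edges H)"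
      then obtain i where i: "i < m" "X \<in> (\<lambda>e. (\<lambda>h. Inr (Inl (i,h))) ` e) ` edges H" by blast
      then obtain f where "f \<in> edges H" "X = (\<lambda>h. Inr (Inl (i,h))) ` f" by blast
      thus thesis using H i(1) X(2) by blast
    next
      assume "X \<in> conn r u v ` {..<m}"
      then obtain i where "i < m" "X = conn r u v i" by blast
      thus thesis using C X(2) by blast
    qed
  next
    assume "e \<in> (\<lambda>e. Inr ` e) ` edges (copies (m - 1) G)"
    then obtain X where X: "X \<in> edges (copies (m - 1) G)" "e = Inr ` X" by (rule imageE)
    then obtain k where k: "k < m - 1" "X \<in> (\<lambda>e. Pair k ` e) ` edges G" unfolding edges_copies by blast
    then obtain f where "f \<in> edges G" "X = Pair k ` f" by blast
    thus thesis using K k(1) X(2) by blast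
  qed
qed

lemma psi_edge:
  assumes i: "i < m" and e: "e \<in> edges LL" and nc: "\<And>j. j < m \<Longrightarrow> j \<noteq> i \<Longrightarrow> e \<noteq> Inl ` conn r u v j"
  shows "psi i ` e \<in> edges RR"
  using e
proof (cases rule: edges_LL_cases)
  case (G f)
  have "psi i ` e = Inl ` (\<lambda>g. Inr (Inl (i,g))) ` f" unfolding G by (simp add: image_image)
  thus ?thesis using G i by (simp add: dunion_edge_L coal_edge_H)
next
  case (H i' f)
  show ?thesis
  proof (cases "i' = i")
    case True
    have "psi i ` e = Inl ` Inl ` f" unfolding H using True by (simp add: image_image)
    thus ?thesis using H by (simp add: dunion_edge_L coal_edge_G)
  next
    case False
    have "psi i ` e = Inr ` Pair (tau i i') ` f" unfolding H using False by (simp add: image_image)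
    moreover have "tau i i' < m - 1" using tau_lt[OF i H(1) False] .
    ultimately show ?thesis using H by (simp add: dunion_edge_R copies_edge)
  qed
next
  case (C j)
  hence "j = i" using nc by blast
  hence "psi i ` e = Inl ` conn r v u i" using C psi_conn by simp
  thus ?thesis using i by (simp add: dunion_edge_L coal_edge_C)
next
  case (K k f)
  have "psi i ` e = Inl ` (\<lambda>g. Inr (Inl (sig i k, g))) ` f" unfolding K by (simp add: image_image)
  moreover have "sig i k < m" using sig_lt[OF i K(1)] .
  ultimately show ?thesis using K by (simp add: dunion_edge_L coal_edge_H)
qed

lemma inner_edge:
  assumes "e \<in> edges LL" "Inl (Inr (Inr (j, jj))) \<in> e"
  shows "e = Inl ` conn r u v j"
  using assms(1)
proof (cases rule: edges_LL_cases)
  case (C i)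
  hence "i = j" using assms(2) by (auto simp: conn_def)
  thus ?thesis using C by simp
next
  case (G f) thus ?thesis using assms(2) by blast
next
  case (H i f) thus ?thesis using assms(2) by blast
next
  case (K k f) thus ?thesis using assms(2) by blast
qed

end

context ctx3 begin

definition cidx :: "(('a + (nat \<times> 'b) + (nat \<times> nat)) + (nat \<times> 'a)) set set \<Rightarrow> nat" where
  "cidx M = (if \<exists>i<m. Inl ` conn r u v i \<in> M then (THE i. i < m \<and> Inl ` conn r u v i \<in> M) else 0)"

definition Phi :: "(('a + (nat \<times> 'b) + (nat \<times> nat)) + (nat \<times> 'a)) set set
     \<Rightarrow> (('b + (nat \<times> 'a) + (nat \<times> nat)) + (nat \<times> 'b)) set set" where
  "Phi M = (\<lambda>e. psi (cidx M) ` e) ` M"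

lemma conn_unique:
  assumes M: "M \<in> MS LL k" and i: "Inl ` conn r u v i \<in> M" and j: "Inl ` conn r u v j \<in> M"
  shows "i = j"
proof (rule ccontr)
  assume ij: "i \<noteq> j"
  have D: "\<forall>e\<in>M. \<forall>f\<in>M. e \<noteq> f \<longrightarrow> e \<inter> f = {}" using M by (simp add: MS_def)
  have a1: "Inl (Inr (Inl (i,v))) \<in> (Inl ` conn r u v i :: (('a + (nat \<times> 'b) + (nat \<times> nat)) + (nat \<times> 'a)) set)"
    by (simp add: conn_def)
  have a0: "Inr (Inl (i,v)) \<notin> conn r u v j" using ij by (simp add: conn_def image_iff)
  have a2: "Inl (Inr (Inl (i,v))) \<notin> (Inl ` conn r u v j :: (('a + (nat \<times> 'b) + (nat \<times> nat)) + (nat \<times> 'a)) set)"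
    using a0 by (simp add: inj_image_mem_iff)
  have ne: "Inl ` conn r u v i \<noteq> (Inl ` conn r u v j :: (('a + (nat \<times> 'b) + (nat \<times> nat)) + (nat \<times> 'a)) set)"
    using a1 a2 by auto
  have "Inl ` conn r u v i \<inter> Inl ` conn r u v j = ({} :: (('a + (nat \<times> 'b) + (nat \<times> nat)) + (nat \<times> 'a)) set)"
    using D[rule_format, OF i j ne] .
  moreover have "Inl (Inl u) \<in> Inl ` conn r u v i \<inter> (Inl ` conn r u v j :: (('a + (nat \<times> 'b) + (nat \<times> nat)) + (nat \<times> 'a)) set)"
    by (simp add: conn_def)
  ultimately show False by simp
qed

lemma cidx_props:
  assumes M: "M \<in> MS LL k"
  shows "cidx M < m" "\<And>j. j < m \<Longrightarrow> Inl ` conn r u v j \<in> M \<Longrightarrow> j = cidx M"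
proof -
  show "cidx M < m"
  proof (cases "\<exists>i<m. Inl ` conn r u v i \<in> M")
    case True
    then obtain i where i: "i < m" "Inl ` conn r u v i \<in> M" by blast
    have "(THE i. i < m \<and> Inl ` conn r u v i \<in> M) = i"
      by (rule the_equality) (use i conn_unique[OF M] in auto)
    thus ?thesis using True i by (simp add: cidx_def)
  next
    case False thus ?thesis unfolding cidx_def using m1 by auto
  qed
  fix j assume j: "j < m" "Inl ` conn r u v j \<in> M"
  have "(THE i. i < m \<and> Inl ` conn r u v i \<in> M) = j"
    by (rule the_equality) (use j conn_unique[OF M] in auto)
  thus "j = cidx M" using j by (auto simp: cidx_def)
qed

lemma Phi_MS: assumes M: "M \<in> MS LL k" shows "Phi M \<in> MS RR k"
proof -
  let ?c = "cidx M"
  have c: "?c < m" using cidx_props(1)[OF M] .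
  have ME: "M \<subseteq> edges LL" and Mc: "card M = k" and Md: "\<forall>e\<in>M. \<forall>f\<in>M. e \<noteq> f \<longrightarrow> e \<inter> f = {}"
    using M by (auto simp: MS_def)
  have sub: "Phi M \<subseteq> edges RR"
  proof
    fix e' assume "e' \<in> Phi M"
    then obtain e where e: "e \<in> M" "e' = psi ?c ` e" by (auto simp: Phi_def)
    have "psi ?c ` e \<in> edges RR"
    proof (rule psi_edge[OF c])
      show "e \<in> edges LL" using e ME by blast
      fix j assume j: "j < m" "j \<noteq> ?c"
      show "e \<noteq> Inl ` conn r u v j"
      proof
        assume "e = Inl ` conn r u v j"
        hence "j = ?c" using cidx_props(2)[OF M j(1)] e(1) by simp
        thus False using j by simp
      qed
    qed
    thus "e' \<in> edges RR" using e by simp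
  qed
  have inj: "inj_on (\<lambda>e. psi ?c ` e) M" using inj_psi by (meson inj_image_eq_iff inj_onI)
  have card: "card (Phi M) = k" unfolding Phi_def using card_image[OF inj] Mc by simp
  have disj: "\<forall>e'\<in>Phi M. \<forall>f'\<in>Phi M. e' \<noteq> f' \<longrightarrow> e' \<inter> f' = {}"
  proof (intro ballI impI)
    fix e' f' assume "e' \<in> Phi M" "f' \<in> Phi M" "e' \<noteq> f'"
    then obtain e f where ef: "e \<in> M" "f \<in> M" "e' = psi ?c ` e" "f' = psi ?c ` f" "e \<noteq> f"
      by (auto simp: Phi_def)
    hence "e \<inter> f = {}" using Md by blast
    moreover have "psi ?c ` e \<inter> psi ?c ` f = psi ?c ` (e \<inter> f)" by (rule image_Int[OF inj_psi, symmetric])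
    ultimately show "e' \<inter> f' = {}" using ef by simp
  qed
  show ?thesis using sub card disj by (simp add: MS_def)
qed

lemma two_in: "2 \<in> {2..r-1}" using r3 by simp

lemma conn_in_Phi:
  assumes M: "M \<in> MS LL k" and j: "j < m"
  shows "Inl ` conn r v u j \<in> Phi M \<longleftrightarrow> Inl ` conn r u v j \<in> M"
proof
  assume "Inl ` conn r u v j \<in> M"
  moreover hence "j = cidx M" using cidx_props(2)[OF M j] by simp
  ultimately show "Inl ` conn r v u j \<in> Phi M" unfolding Phi_def using psi_conn[of j r u v]
    by (metis image_eqI)
next
  let ?c = "cidx M"
  assume "Inl ` conn r v u j \<in> Phi M"
  then obtain e where e: "e \<in> M" "Inl ` conn r v u j = psi ?c ` e" by (auto simp: Phi_def)
  have ee: "e = psi ?c ` (Inl ` conn r v u j)" using e(2) by simp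
  have eL: "e \<in> edges LL" using e(1) M by (auto simp: MS_def)
  show "Inl ` conn r u v j \<in> M"
  proof (cases "j = ?c")
    case True
    have "psi j ` (Inl ` conn r v u j) = Inl ` conn r u v j" by (rule psi_conn)
    thus ?thesis using ee e(1) True by simp
  next
    case False
    have "Inl (Inr (Inr (j, 2))) \<in> e"
    proof -
      have "Inl (Inr (Inr (j, 2))) \<in> (Inl ` conn r v u j :: (('b + (nat \<times> 'a) + (nat \<times> nat)) + (nat \<times> 'b)) set)"
        using two_in by (simp add: conn_def)
      hence "psi ?c (Inl (Inr (Inr (j, 2)))) \<in> e" unfolding ee by (rule imageI)
      thus ?thesis by simp
    qed
    hence "e = Inl ` conn r u v j" by (rule inner_edge[OF eL])
    thus ?thesis using e(1) by simp
  qed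
qed

lemma cidx_Phi:
  assumes M: "M \<in> MS LL k"
  shows "cidx M = (if \<exists>i<m. Inl ` conn r v u i \<in> Phi M then (THE i. i < m \<and> Inl ` conn r v u i \<in> Phi M) else 0)"
proof -
  have eq: "(\<lambda>i. i < m \<and> Inl ` conn r v u i \<in> Phi M) = (\<lambda>i. i < m \<and> Inl ` conn r u v i \<in> M)"
    using conn_in_Phi[OF M] by blast
  have eq2: "(\<exists>i<m. Inl ` conn r v u i \<in> Phi M) = (\<exists>i<m. Inl ` conn r u v i \<in> M)"
    using conn_in_Phi[OF M] by blast
  show ?thesis unfolding eq eq2 cidx_def ..
qed

lemma Phi_inj: "inj_on Phi (MS LL k)"
proof (rule inj_onI)
  fix M1 M2 assume M1: "M1 \<in> MS LL k" and M2: "M2 \<in> MS LL k" and eq: "Phi M1 = Phi M2"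
  have c: "cidx M1 = cidx M2"
  proof -
    have "cidx M1 = (if \<exists>i<m. Inl ` conn r v u i \<in> Phi M1 then (THE i. i < m \<and> Inl ` conn r v u i \<in> Phi M1) else 0)"
      by (rule cidx_Phi[OF M1])
    also have "\<dots> = (if \<exists>i<m. Inl ` conn r v u i \<in> Phi M2 then (THE i. i < m \<and> Inl ` conn r v u i \<in> Phi M2) else 0)"
      unfolding eq by (rule refl)
    also have "\<dots> = cidx M2" by (rule cidx_Phi[OF M2, symmetric])
    finally show ?thesis .
  qed
  have inj: "inj (\<lambda>e. psi (cidx M1) ` e)" using inj_psi by (meson inj_image_eq_iff injI)
  have "(\<lambda>e. psi (cidx M1) ` e) ` M1 = (\<lambda>e. psi (cidx M1) ` e) ` M2" using eq c by (simp add: Phi_def)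
  thus "M1 = M2" using inj_image_eq_iff[OF inj, of M1 M2] by blast
qed

lemma uniform_RR: "uniform_hg r RR"
  using uniform_dunion[OF uniform_coal[OF UH UG r2 v u] uniform_copies[OF UH]] .

lemma uniform_LL: "uniform_hg r LL"
  using uniform_dunion[OF uniform_coal[OF UG UH r2 u v] uniform_copies[OF UG]] .

lemma match_le: "match_count LL k \<le> match_count RR k"
proof -
  have fin: "finite (MS RR k)"
  proof (rule finite_subset)
    show "MS RR k \<subseteq> Pow (edges RR)" by (auto simp: MS_def)
    show "finite (Pow (edges RR))" using uniform_finite_edges[OF uniform_RR] by simp
  qed
  have "card (MS LL k) \<le> card (MS RR k)"
    by (rule card_inj_on_le[OF Phi_inj _ fin]) (use Phi_MS in blast)
  thus ?thesis by (simp add: match_count_MS)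
qed

lemma verts_le: "card (verts LL) \<le> card (verts RR)"
proof (rule card_inj_on_le)
  show "inj_on (psi 0) (verts LL)" using inj_psi by (rule inj_on_subset) simp
  show "finite (verts RR)" using uniform_RR by (simp add: uniform_hg_def)
  have m0: "0 < m" using m1 by simp
  show "psi 0 ` verts LL \<subseteq> verts RR"
  proof
    fix y assume "y \<in> psi 0 ` verts LL"
    then obtain x where x: "x \<in> verts LL" "y = psi 0 x" by blast
    from x(1) have "(\<exists>z. x = Inl z \<and> z \<in> verts (coalesce r G u m H v)) \<or> (\<exists>k g. x = Inr (k, g) \<and> k < m - 1 \<and> g \<in> verts G)"
      unfolding verts_dunion verts_copies by blast
    thus "y \<in> verts RR"
    proof (elim disjE exE conjE)
      fix z assume z: "x = Inl z" "z \<in> verts (coalesce r G u m H v)"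
      from z(2) have "(\<exists>g. z = Inl g \<and> g \<in> verts G) \<or> (\<exists>i h. z = Inr (Inl (i,h)) \<and> i < m \<and> h \<in> verts H)
          \<or> (\<exists>i j. z = Inr (Inr (i,j)) \<and> i < m \<and> j \<in> {2..r-1})"
        unfolding verts_coal by auto
      thus ?thesis
      proof (elim disjE exE conjE)
        fix g assume "z = Inl g" "g \<in> verts G"
        thus ?thesis using x z m0 by (simp add: verts_dunion in_verts_coal2)
      next
        fix i h assume ih: "z = Inr (Inl (i,h))" "i < m" "h \<in> verts H"
        show ?thesis
        proof (cases "i = 0")
          case True thus ?thesis using x z ih by (simp add: verts_dunion in_verts_coal1)
        next
          case False
          have "tau 0 i < m - 1" using tau_lt[OF m0 ih(2) False] .
          thus ?thesis using x z ih False by (simp add: verts_dunion verts_copies)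
        qed
      next
        fix i j assume "z = Inr (Inr (i,j))" "i < m" "j \<in> {2..r-1}"
        thus ?thesis using x z by (simp add: verts_dunion in_verts_coal3)
      qed
    next
      fix k g assume kg: "x = Inr (k, g)" "k < m - 1" "g \<in> verts G"
      have "sig 0 k < m" using sig_lt[OF m0 kg(2)] .
      thus ?thesis using x kg by (simp add: verts_dunion in_verts_coal2)
    qed
  qed
qed

end

theorem theorem6:
  fixes r m :: nat and G :: "'a hgraph" and H :: "'b hgraph" and u :: 'a and v :: 'b
  assumes "m \<ge> 1" and "r \<ge> 3"
    and "supertree r G" and "supertree r H"
    and "u \<in> verts G" and "v \<in> verts H"
  shows "spectral_radius r (dunion (coalesce r G u m H v) (copies (m - 1) G))
           = spectral_radius r (dunion (coalesce r H v m G u) (copies (m - 1) H))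
         \<and> spectral_radius r (coalesce r G u m H v) = spectral_radius r (coalesce r H v m G u)
         \<and> matching_energy r (dunion (coalesce r G u m H v) (copies (m - 1) G))
           = matching_energy r (dunion (coalesce r H v m G u) (copies (m - 1) H))"
proof -
  have UG: "uniform_hg r G" and UH: "uniform_hg r H" using assms(3,4) by (auto simp: supertree_def)
  interpret C1: ctx3 r G u H v m
    by (intro ctx3.intro ctx2.intro ctx3_axioms.intro) (use assms UG UH in auto)
  interpret C2: ctx3 r H v G u m
    by (intro ctx3.intro ctx2.intro ctx3_axioms.intro) (use assms UG UH in auto)
  have eqMM: "MM r (coalesce r G u m H v) = MM r (coalesce r H v m G u)"
    using C1.MM_coal_le C2.MM_coal_le by (rule antisym)
  have sp1: "spectral_radius r (coalesce r G u m H v) = r * MM r (coalesce r G u m H v)"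
    by (rule hgctx.spectral_radius_MM[OF C1.hT])
  have sp2: "spectral_radius r (coalesce r H v m G u) = r * MM r (coalesce r H v m G u)"
    by (rule hgctx.spectral_radius_MM[OF C2.hT])
  have hL: "hgctx r (dunion (coalesce r G u m H v) (copies (m - 1) G))"
    by (rule hgctx_dunion[OF C1.hT uniform_copies[OF UG]])
  have hR: "hgctx r (dunion (coalesce r H v m G u) (copies (m - 1) H))"
    by (rule hgctx_dunion[OF C2.hT uniform_copies[OF UH]])
  have mL: "MM r (dunion (coalesce r G u m H v) (copies (m - 1) G)) = MM r (coalesce r G u m H v)"
    by (rule MM_union[OF C1.hT uniform_copies[OF UG]]) (rule copies_bound[OF C1.hG C1.MM_G_le])
  have mR: "MM r (dunion (coalesce r H v m G u) (copies (m - 1) H)) = MM r (coalesce r H v m G u)"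
    by (rule MM_union[OF C2.hT uniform_copies[OF UH]]) (rule copies_bound[OF C2.hG C2.MM_G_le])
  have spL: "spectral_radius r (dunion (coalesce r G u m H v) (copies (m - 1) G))
      = r * MM r (dunion (coalesce r G u m H v) (copies (m - 1) G))"
    by (rule hgctx.spectral_radius_MM[OF hL])
  have spR: "spectral_radius r (dunion (coalesce r H v m G u) (copies (m - 1) H))
      = r * MM r (dunion (coalesce r H v m G u) (copies (m - 1) H))"
    by (rule hgctx.spectral_radius_MM[OF hR])
  have cv: "card (verts (dunion (coalesce r G u m H v) (copies (m - 1) G)))
      = card (verts (dunion (coalesce r H v m G u) (copies (m - 1) H)))"
    using C1.verts_le C2.verts_le by (rule antisym)
  have mc: "match_count (dunion (coalesce r G u m H v) (copies (m - 1) G)) k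
      = match_count (dunion (coalesce r H v m G u) (copies (m - 1) H)) k" for k
    using C1.match_le C2.match_le by (rule antisym)
  have mp: "matching_poly r (dunion (coalesce r G u m H v) (copies (m - 1) G))
      = matching_poly r (dunion (coalesce r H v m G u) (copies (m - 1) H))"
    unfolding matching_poly_def cv mc ..
  show ?thesis
    using spL spR mL mR eqMM sp1 sp2 mp by (simp add: matching_energy_def)
qed

end
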